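(* For every integer $n\ge 1$, the combinatorial neural codes $S_n$ and $P(2_n)$ are $1$-inductively pierced.
   Context: A combinatorial neural code on $m$ neurons is a set $\mathcal{C}\subseteq\{0,1\}^m$ containing the all-zeros word. Its abstract description is $\mathcal{D}=(\mathcal{L},\mathcal{Z})$ with curve labels $\mathcal{L}=\{\lambda_1,\dots,\lambda_m\}$ and zones $\mathcal{Z}=\{\{\lambda_i : c_i=1\} : c\in\mathcal{C}\}\subseteq 2^{\mathcal{L}}$ (so $\emptyset\in\mathcal{Z}$). An Euler diagram (a collection of labelled simple closed curves in the plane, zones being the nonempty regions $\bigcap_{\lambda_i\in Z}U_i\cap\bigcap_{\lambda_j\notin Z}U_j^c$ with $U_i$ the interior of $\lambda_i$) realizes $\mathcal{D}$ if its labels and zones are those of $\mathcal{D}$; it is well-formed if each label is used exactly once, curves meet in finitely many points, each point of the plane is passed through at most twice by the curves, and each zone is connected. $\mathcal{D}$ is well-formed if it has a well-formed realization. For $\lambda\in\mathcal{L}$ let $\mathcal{X}_\lambda=\{Z\in\mathcal{Z}:\lambda\in Z\}$. For $Z\in\mathcal{Z}$ and $\Lambda\subseteq\mathcal{L}$ with $Z\cap\Lambda=\emptyset$ let $\mathcal{Y}_{Z,\Lambda}=\{Z\cup\Lambda' : \Lambda'\subseteq\Lambda\}$. Given distinct labels $\Lambda=\{\lambda_1,\dots,\lambda_k\}\subseteq\mathcal{L}$, a label $\lambda_{k+1}\in\mathcal{L}$ is a $k$-piercing of $\Lambda$ in $\mathcal{D}$ if there is a zone $Z\in\mathcal{Z}$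 with (1) $\lambda_i\notin Z$ for all $i\le k+1$, (2) $\mathcal{X}_{\lambda_{k+1}}=\mathcal{Y}_{Z\cup\{\lambda_{k+1}\},\Lambda}$, and (3) $\mathcal{Y}_{Z,\Lambda}\subseteq\mathcal{Z}$. The removal of $\lambda$ is $\mathcal{D}\setminus\lambda=(\mathcal{L}\setminus\{\lambda\},\{Z\setminus\{\lambda\}:Z\in\mathcal{Z}\})$. Recursively, $(\emptyset,\{\emptyset\})$ is $k$-inductively pierced for all $k$, and $\mathcal{D}$ is $k$-inductively pierced if it has a $j$-piercing $\lambda$ (of some set of $j$ labels) for some $j\in\{0,\dots,k\}$ such that $\mathcal{D}\setminus\lambda$ is $k$-inductively pierced. A code is $k$-inductively pierced if it has a well-formed abstract description that is $k$-inductively pierced. Codes: with $e_i\in\mathbb{R}^{n+1}$ the standard basis vectors, $S_n=\{0,s_1,\dots,s_{2n}\}$ where $s_i=e_1+e_{i+1}+e_{n+1}$ for $1\le i<n$, $s_n=e_1+e_{n+1}$, $s_i=e_{i+1-n}+e_{n+1}$ for $n<i<2n$, $s_{2n}=e_{n+1}$. The code $P(2_n)\subseteq\{0,1\}^{2n+1}$ consists of the zero word together with the columns of the $(2n+1)\times(3n+1)$ matrix $M_n$ whose columns, for $i=0,\dots,n-1$, are: column $3i+1$ equal to $e_{2i+1}+e_{2n+1}$, column $3i+2$ equal to $e_{2i+1}+e_{2i+2}+e_{2n+1}$, column $3i+3$ equal to $e_{2i+2}+e_{2n+1}$, and column $3n+1$ equal to $e_{2n+1}$ (here $e_i\in\mathbb{R}^{2n+1}$).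 (Equivalently, the first $3n$ columns are $A\oplus\cdots\oplus A$ with $A=\begin{bmatrix}1&1&0\\0&1&1\end{bmatrix}$, with a row of ones appended.) *)

theory Defs
  imports "HOL-Analysis.Analysis"
begin

text \<open>A word of {0,1}^m is a list of naturals of length m with entries in {0,1}.
  Coordinates are 1-indexed as in the paper: coordinate i is the list entry at position i-1.\<close>

definition unit_vec :: "nat \<Rightarrow> nat \<Rightarrow> nat list" where
  "unit_vec m i = map (\<lambda>j. if j = i then 1 else 0) [1..<m+1]"

definition vadd :: "nat list \<Rightarrow> nat list \<Rightarrow> nat list" where
  "vadd u v = map2 (+) u v"

definition zero_word :: "nat \<Rightarrow> nat list" where
  "zero_word m = replicate m 0"

definition is_code :: "nat \<Rightarrow> nat list set \<Rightarrow> bool" where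
  "is_code m C \<longleftrightarrow> zero_word m \<in> C \<and> (\<forall>c\<in>C. length c = m \<and> set c \<subseteq> {0,1})"

text \<open>An abstract description is a pair (L, Zs) of a label set and a set of zones.
  For a code on m neurons the labels are 1..m (label i stands for lambda_i).\<close>

definition desc :: "nat \<Rightarrow> nat list set \<Rightarrow> nat set \<times> nat set set" where
  "desc m C = ({1..m}, (\<lambda>c. {i\<in>{1..m}. c ! (i - 1) = 1}) ` C)"

definition zone_region :: "(nat \<Rightarrow> real \<Rightarrow> complex) \<Rightarrow> nat set \<Rightarrow> nat set \<Rightarrow> complex set" where
  "zone_region \<gamma> L Z =
     (\<Inter>l\<in>Z. inside (path_image (\<gamma> l))) \<inter> (\<Inter>l\<in>L - Z. - inside (path_image (\<gamma> l)))"

definition realizes :: "(nat \<Rightarrow> real \<Rightarrow> complex) \<Rightarrow> nat set \<times> nat set set \<Rightarrow> bool" where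
  "realizes \<gamma> D \<longleftrightarrow>
     (\<forall>l\<in>fst D. simple_path (\<gamma> l) \<and> pathfinish (\<gamma> l) = pathstart (\<gamma> l)) \<and>
     {Z. Z \<subseteq> fst D \<and> zone_region \<gamma> (fst D) Z \<noteq> {}} = snd D"

definition well_formed_realization :: "(nat \<Rightarrow> real \<Rightarrow> complex) \<Rightarrow> nat set \<times> nat set set \<Rightarrow> bool" where
  "well_formed_realization \<gamma> D \<longleftrightarrow>
     realizes \<gamma> D \<and>
     (\<forall>l\<in>fst D. \<forall>l'\<in>fst D. l \<noteq> l' \<longrightarrow> finite (path_image (\<gamma> l) \<inter> path_image (\<gamma> l'))) \<and>
     (\<forall>p. card {l\<in>fst D. p \<in> path_image (\<gamma> l)} \<le> 2) \<and>
     (\<forall>Z\<in>snd D. connected (zone_region \<gamma> (fst D) Z))"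

definition well_formed :: "nat set \<times> nat set set \<Rightarrow> bool" where
  "well_formed D \<longleftrightarrow> finite (fst D) \<and> (\<exists>\<gamma>. well_formed_realization \<gamma> D)"

definition Xset :: "nat set set \<Rightarrow> nat \<Rightarrow> nat set set" where
  "Xset Zs l = {Z\<in>Zs. l \<in> Z}"

definition Yset :: "nat set \<Rightarrow> nat set \<Rightarrow> nat set set" where
  "Yset Z \<Lambda> = {Z \<union> \<Lambda>' | \<Lambda>'. \<Lambda>' \<subseteq> \<Lambda>}"

definition is_piercing :: "nat \<Rightarrow> nat set \<Rightarrow> nat set set \<Rightarrow> nat set \<Rightarrow> nat \<Rightarrow> bool" where
  "is_piercing k L Zs \<Lambda> l \<longleftrightarrow>
     finite \<Lambda> \<and> card \<Lambda> = k \<and> \<Lambda> \<subseteq> L \<and> l \<in> L \<and> l \<notin> \<Lambda> \<and>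
     (\<exists>Z\<in>Zs. l \<notin> Z \<and> Z \<inter> \<Lambda> = {} \<and>
        Xset Zs l = Yset (insert l Z) \<Lambda> \<and> Yset Z \<Lambda> \<subseteq> Zs)"

definition remove_label :: "nat \<Rightarrow> nat set \<times> nat set set \<Rightarrow> nat set \<times> nat set set" where
  "remove_label l D = (fst D - {l}, (\<lambda>Z. Z - {l}) ` snd D)"

inductive k_ind_pierced :: "nat \<Rightarrow> nat set \<times> nat set set \<Rightarrow> bool" for k where
  empty: "k_ind_pierced k ({}, {{}})"
| step: "\<lbrakk> j \<le> k; is_piercing j (fst D) (snd D) \<Lambda> l; k_ind_pierced k (remove_label l D) \<rbrakk>
         \<Longrightarrow> k_ind_pierced k D"

definition code_k_ind_pierced :: "nat \<Rightarrow> nat \<Rightarrow> nat list set \<Rightarrow> bool" where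
  "code_k_ind_pierced k m C \<longleftrightarrow>
     is_code m C \<and> well_formed (desc m C) \<and> k_ind_pierced k (desc m C)"

definition s_word :: "nat \<Rightarrow> nat \<Rightarrow> nat list" where
  "s_word n i =
    (if i < n then vadd (vadd (unit_vec (n+1) 1) (unit_vec (n+1) (i+1))) (unit_vec (n+1) (n+1))
     else if i = n then vadd (unit_vec (n+1) 1) (unit_vec (n+1) (n+1))
     else if i < 2*n then vadd (unit_vec (n+1) (i+1-n)) (unit_vec (n+1) (n+1))
     else unit_vec (n+1) (n+1))"

definition S_code :: "nat \<Rightarrow> nat list set" where
  "S_code n = insert (zero_word (n+1)) (s_word n ` {1..2*n})"

definition P2_code :: "nat \<Rightarrow> nat list set" where
  "P2_code n = insert (zero_word (2*n+1))
     (insert (unit_vec (2*n+1) (2*n+1))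
       (\<Union>i\<in>{0..<n}.
          { vadd (unit_vec (2*n+1) (2*i+1)) (unit_vec (2*n+1) (2*n+1)),
            vadd (vadd (unit_vec (2*n+1) (2*i+1)) (unit_vec (2*n+1) (2*i+2))) (unit_vec (2*n+1) (2*n+1)),
            vadd (unit_vec (2*n+1) (2*i+2)) (unit_vec (2*n+1) (2*n+1)) }))"

end

theory Submission
  imports Defs "HOL-Complex_Analysis.Contour_Integration"
begin


definition rect :: "real \<Rightarrow> real \<Rightarrow> real \<Rightarrow> real \<Rightarrow> complex set" where
  "rect a b c d = box (Complex a c) (Complex b d)"

lemma mem_rect: "z \<in> rect a b c d \<longleftrightarrow> a < Re z \<and> Re z < b \<and> c < Im z \<and> Im z < d"
  by (auto simp: rect_def in_box_complex_iff)

lemma rect_ne: "a < b \<Longrightarrow> c < d \<Longrightarrow> box (Complex a c) (Complex b d) \<noteq> {}"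
proof -
  assume "a < b" "c < d"
  then have "Complex ((a+b)/2) ((c+d)/2) \<in> box (Complex a c) (Complex b d)"
    by (simp add: in_box_complex_iff)
  then show ?thesis by blast
qed

lemma frontier_rect:
  assumes "a < b" "c < d"
  shows "z \<in> frontier (rect a b c d) \<longleftrightarrow> a \<le> Re z \<and> Re z \<le> b \<and> c \<le> Im z \<and> Im z \<le> d \<and>
     \<not>(a < Re z \<and> Re z < b \<and> c < Im z \<and> Im z < d)"
proof -
  have ne: "box (Complex a c) (Complex b d) \<noteq> {}" using assms by (rule rect_ne)
  have "frontier (box (Complex a c) (Complex b d)) = cbox (Complex a c) (Complex b d) - box (Complex a c) (Complex b d)"
    using ne by (simp add: frontier_def interior_open[OF open_box])
  then show ?thesis unfolding rect_def
    by (simp add: in_box_complex_iff in_cbox_complex_iff)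
qed

lemma rect_path:
  assumes "a < b" "c < d"
  shows "\<exists>g. simple_path g \<and> pathfinish g = pathstart g \<and> path_image g = frontier (rect a b c d)
            \<and> inside (path_image g) = rect a b c d"
proof -
  let ?S = "rect a b c d"
  have ne: "?S \<noteq> {}" using assms rect_ne by (simp add: rect_def)
  have op: "open ?S" by (simp add: rect_def open_box)
  have cv: "convex ?S" "bounded ?S" by (simp_all add: rect_def convex_box bounded_box)
  have aff: "aff_dim ?S = aff_dim (cball (0::complex) 1)"
    using aff_dim_open[OF op ne] aff_dim_open[of "ball (0::complex) 1"]
    by (simp add: aff_dim_cball)
  have "rel_frontier ?S homeomorphic rel_frontier (cball (0::complex) 1)"
    by (rule homeomorphic_rel_frontiers_convex_bounded_sets[OF cv(1) cv(2) _ _ aff]) simp_all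
  moreover have "rel_frontier ?S = frontier ?S"
    using op ne by (simp add: rel_frontier_nonempty_interior interior_open)
  moreover have "rel_frontier (cball (0::complex) 1) = sphere 0 1" by simp
  ultimately have "sphere (0::complex) 1 homeomorphic frontier ?S"
    by (metis homeomorphic_sym)
  then obtain f h where f: "homeomorphism (sphere (0::complex) 1) (frontier ?S) f h"
    by (auto simp: homeomorphic_def)
  define g where "g = f \<circ> circlepath 0 1"
  have "simple_path g" unfolding g_def
  proof (rule simple_path_continuous_image)
    show "simple_path (circlepath (0::complex) 1)" by (simp add: simple_path_circlepath)
    show "continuous_on (path_image (circlepath 0 1)) f" using f by (simp add: homeomorphism_def)
    show "inj_on f (path_image (circlepath 0 1))"
      using f unfolding homeomorphism_def by (metis (no_types, lifting) inj_on_inverseI path_image_circlepath abs_one)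
  qed
  moreover have "pathfinish g = pathstart g" by (simp add: g_def pathfinish_compose pathstart_compose)
  moreover have "path_image g = frontier ?S"
    using f by (simp add: g_def path_image_compose homeomorphism_def)
  moreover have "inside (frontier ?S) = ?S"
    using cv op by (simp add: inside_frontier_eq_interior interior_open)
  ultimately show ?thesis by auto
qed



lemma card_le2: "A \<subseteq> {u,v} \<Longrightarrow> card A \<le> (2::nat)"
proof -
  assume "A \<subseteq> {u,v}"
  then have "card A \<le> card {u,v}" by (intro card_mono) auto
  also have "\<dots> \<le> 2" by (simp add: card_insert_if)
  finally show ?thesis .
qed

lemma wf_rects:
  fixes L :: "nat set" and Zs :: "nat set set" and R :: "nat \<Rightarrow> complex set"
  assumes fin: "finite L"
  and rects: "\<And>l. l \<in> L \<Longrightarrow> \<exists>a b c d. a<b \<and> c<d \<and> R l = rect a b c d"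
  and fint: "\<And>l l'. l\<in>L \<Longrightarrow> l'\<in>L \<Longrightarrow> l\<noteq>l' \<Longrightarrow> finite (frontier (R l) \<inter> frontier (R l'))"
  and card: "\<And>p. \<exists>u v. {l\<in>L. p \<in> frontier (R l)} \<subseteq> {u,v}"
  and zones: "range (\<lambda>p. {l\<in>L. p \<in> R l}) = Zs"
  and conn: "\<And>Z. Z\<in>Zs \<Longrightarrow> connected {p. {l\<in>L. p\<in>R l} = Z}"
  shows "well_formed (L, Zs)"
proof -
  have "\<forall>l. \<exists>g. l \<in> L \<longrightarrow> (simple_path g \<and> pathfinish g = pathstart g \<and> path_image g = frontier (R l) \<and> inside (path_image g) = R l)"
    using rects rect_path by metis
  then obtain \<gamma> where g: "\<And>l. l \<in> L \<Longrightarrow> simple_path (\<gamma> l) \<and> pathfinish (\<gamma> l) = pathstart (\<gamma> l) \<and> path_image (\<gamma> l) = frontier (R l) \<and> inside (path_image (\<gamma> l)) = R l"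
    by metis
  have ins: "\<And>l. l \<in> L \<Longrightarrow> inside (path_image (\<gamma> l)) = R l" using g by blast
  have zr: "zone_region \<gamma> L Z = {p. {l\<in>L. p\<in>R l} = Z}" if "Z \<subseteq> L" for Z
  proof -
    have 1: "(\<Inter>l\<in>Z. inside (path_image (\<gamma> l))) = (\<Inter>l\<in>Z. R l)"
      using that ins by (intro INF_cong) auto
    have 2: "(\<Inter>l\<in>L - Z. - inside (path_image (\<gamma> l))) = (\<Inter>l\<in>L-Z. - R l)"
      using that ins by (intro INF_cong) auto
    show ?thesis unfolding zone_region_def 1 2 using that by auto
  qed
  have "{Z. Z \<subseteq> L \<and> zone_region \<gamma> L Z \<noteq> {}} = Zs"
  proof
    show "{Z. Z \<subseteq> L \<and> zone_region \<gamma> L Z \<noteq> {}} \<subseteq> Zs"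
      using zones zr by auto
    show "Zs \<subseteq> {Z. Z \<subseteq> L \<and> zone_region \<gamma> L Z \<noteq> {}}"
    proof
      fix Z assume "Z \<in> Zs"
      then obtain p where p: "Z = {l\<in>L. p \<in> R l}" using zones by auto
      then have "Z \<subseteq> L" by auto
      moreover have "p \<in> zone_region \<gamma> L Z" using zr[OF \<open>Z \<subseteq> L\<close>] p by auto
      ultimately show "Z \<in> {Z. Z \<subseteq> L \<and> zone_region \<gamma> L Z \<noteq> {}}" by auto
    qed
  qed
  then have real: "realizes \<gamma> (L, Zs)" unfolding realizes_def using g by auto
  have fi: "\<forall>l\<in>L. \<forall>l'\<in>L. l \<noteq> l' \<longrightarrow> finite (path_image (\<gamma> l) \<inter> path_image (\<gamma> l'))"
    using g fint by auto
  have ca: "\<forall>p. card {l\<in>L. p \<in> path_image (\<gamma> l)} \<le> 2"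
  proof
    fix p
    obtain u v where "{l\<in>L. p \<in> frontier (R l)} \<subseteq> {u,v}" using card by blast
    moreover have "{l\<in>L. p \<in> path_image (\<gamma> l)} = {l\<in>L. p \<in> frontier (R l)}" using g by auto
    ultimately show "card {l\<in>L. p \<in> path_image (\<gamma> l)} \<le> 2" using card_le2 by metis
  qed
  have co: "\<forall>Z\<in>Zs. connected (zone_region \<gamma> L Z)"
  proof
    fix Z assume "Z \<in> Zs"
    then have "Z \<subseteq> L" using zones by auto
    then show "connected (zone_region \<gamma> L Z)" using zr conn \<open>Z \<in> Zs\<close> by simp
  qed
  show ?thesis unfolding well_formed_def well_formed_realization_def
    using fin real fi ca co by auto
qed

lemma conn_hub:
  fixes S T :: "complex set"
  assumes "connected T" "T \<subseteq> S"
    and h: "\<And>x. x \<in> S \<Longrightarrow> \<exists>y z. z \<in> T \<and> closed_segment x y \<subseteq> S \<and> closed_segment y z \<subseteq> S"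
  shows "connected S"
proof -
  have cT: "connected_component S z z'" if "z \<in> T" "z' \<in> T" for z z'
    using assms(1,2) that connected_component_def by blast
  have cx: "\<exists>z\<in>T. connected_component S x z" if xS: "x \<in> S" for x
  proof -
    obtain y z where yz: "z \<in> T" "closed_segment x y \<subseteq> S" "closed_segment y z \<subseteq> S" using h[OF xS] by blast
    have "connected_component S x y" using yz(2) connected_component_def
      by (metis connected_segment ends_in_segment(1) ends_in_segment(2))
    moreover have "connected_component S y z" using yz(3) connected_component_def
      by (metis connected_segment ends_in_segment(1) ends_in_segment(2))
    ultimately show ?thesis using yz(1) connected_component_trans by blast
  qed
  show ?thesis unfolding connected_iff_connected_component
  proof (intro ballI)
    fix x x' assume "x \<in> S" "x' \<in> S"
    then obtain z z' where "z\<in>T" "z'\<in>T" "connected_component S x z" "connected_component S x' z'"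
      using cx by blast
    then show "connected_component S x x'"
      using cT connected_component_sym connected_component_trans by metis
  qed
qed

lemma seg_bounds:
  assumes "u \<in> closed_segment x y"
  shows "min (Re x) (Re y) \<le> Re u \<and> Re u \<le> max (Re x) (Re y) \<and>
         min (Im x) (Im y) \<le> Im u \<and> Im u \<le> max (Im x) (Im y)"
proof -
  obtain t where t: "0 \<le> t" "t \<le> 1" "u = (1 - t) *\<^sub>R x + t *\<^sub>R y"
    using assms in_segment(1) by blast
  have a: "min p q \<le> (1-t)*p + t*q \<and> (1-t)*p + t*q \<le> max p q" for p q :: real
  proof -
    have "(1-t)*p + t*q \<le> (1-t)*max p q + t* max p q"
      using t by (intro add_mono mult_left_mono) auto
    moreover have "(1-t)*min p q + t* min p q \<le> (1-t)*p + t*q"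
      using t by (intro add_mono mult_left_mono) auto
    ultimately show ?thesis by (simp add: algebra_simps)
  qed
  show ?thesis using a[of "Re x" "Re y"] a[of "Im x" "Im y"] t(3) by simp
qed



lemma nat_sep: "j < k \<Longrightarrow> real j + 1 \<le> real k"
proof -
  assume "j < k" then have "Suc j \<le> k" by simp
  then have "real (Suc j) \<le> real k" by (simp only: of_nat_le_iff)
  then show ?thesis by simp
qed

lemma uniqS: "2*real j - 2 \<le> x \<Longrightarrow> x \<le> 2*real j - 1 \<Longrightarrow> 2*real k - 2 \<le> x \<Longrightarrow> x \<le> 2*real k - 1 \<Longrightarrow> j = k"
  using nat_sep[of j k] nat_sep[of k j] by (cases "j < k"; cases "k < j") auto

definition inO :: "nat \<Rightarrow> complex \<Rightarrow> bool" where
  "inO n p \<longleftrightarrow> 0 < Re p \<and> Re p < 2*real n+2 \<and> 0 < Im p \<and> Im p < 5"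
definition inA :: "nat \<Rightarrow> complex \<Rightarrow> bool" where
  "inA n p \<longleftrightarrow> 1 < Re p \<and> Re p < 2*real n+1 \<and> 1 < Im p \<and> Im p < 3"
definition inB :: "nat \<Rightarrow> complex \<Rightarrow> bool" where
  "inB j p \<longleftrightarrow> 2*real j-2 < Re p \<and> Re p < 2*real j-1 \<and> 2 < Im p \<and> Im p < 4"

definition RS :: "nat \<Rightarrow> nat \<Rightarrow> complex set" where
  "RS n l = (if l = n+1 then rect 0 (2*real n+2) 0 5 else if l = 1 then rect 1 (2*real n+1) 1 3
             else rect (2*real l-2) (2*real l-1) 2 4)"

lemma memS_O: "p \<in> RS n (n+1) \<longleftrightarrow> inO n p"
  by (simp add: RS_def mem_rect inO_def)
lemma memS_A: "n \<ge> 1 \<Longrightarrow> p \<in> RS n 1 \<longleftrightarrow> inA n p"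
  by (simp add: RS_def mem_rect inA_def)
lemma memS_B: "l \<noteq> 1 \<Longrightarrow> l \<noteq> n+1 \<Longrightarrow> p \<in> RS n l \<longleftrightarrow> inB l p"
  by (simp add: RS_def mem_rect inB_def)

lemma frS_O: "p \<in> frontier (RS n (n+1)) \<longleftrightarrow> 0 \<le> Re p \<and> Re p \<le> 2*real n+2 \<and> 0 \<le> Im p \<and> Im p \<le> 5 \<and> \<not> inO n p"
  unfolding RS_def inO_def by (simp add: frontier_rect)
lemma frS_A: "n \<ge> 1 \<Longrightarrow> p \<in> frontier (RS n 1) \<longleftrightarrow> 1 \<le> Re p \<and> Re p \<le> 2*real n+1 \<and> 1 \<le> Im p \<and> Im p \<le> 3 \<and> \<not> inA n p"
  unfolding RS_def inA_def by (simp add: frontier_rect)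
lemma frS_B: "l \<noteq> 1 \<Longrightarrow> l \<noteq> n+1 \<Longrightarrow> p \<in> frontier (RS n l) \<longleftrightarrow> 2*real l-2 \<le> Re p \<and> Re p \<le> 2*real l-1 \<and> 2 \<le> Im p \<and> Im p \<le> 4 \<and> \<not> inB l p"
  unfolding RS_def inB_def by (simp add: frontier_rect)

definition zsetS :: "nat \<Rightarrow> complex \<Rightarrow> nat set" where
  "zsetS n p = {l\<in>{1..n+1}. p \<in> RS n l}"

lemma labS: "(l::nat) \<in> {1..n+1} \<Longrightarrow> l = 1 \<or> l = n+1 \<or> (l \<in> {2..n} \<and> l \<noteq> 1 \<and> l \<noteq> n+1)"
  by auto

lemma B_O: "2 \<le> j \<Longrightarrow> j \<le> n \<Longrightarrow> inB j p \<Longrightarrow> inO n p"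
proof -
  assume "2 \<le> j" "j \<le> n" "inB j p"
  then have "real j \<le> real n" "2 \<le> real j" by auto
  then show ?thesis using \<open>inB j p\<close> unfolding inB_def inO_def by linarith
qed
lemma A_O: "inA n p \<Longrightarrow> inO n p"
  unfolding inA_def inO_def by linarith

lemma B_uniq: "inB j p \<Longrightarrow> inB k p \<Longrightarrow> j = k"
  unfolding inB_def by (rule uniqS[of j "Re p" k]) auto

lemma ballS: "n \<ge> 1 \<Longrightarrow> (\<forall>l\<in>{1..n+1}. P l) \<longleftrightarrow> P 1 \<and> P (n+1) \<and> (\<forall>l\<in>{2..n}. P (l::nat))"
proof
  assume n: "n \<ge> 1"
  assume "\<forall>l\<in>{1..n+1}. P l"
  then show "P 1 \<and> P (n+1) \<and> (\<forall>l\<in>{2..n}. P l)" using n by auto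
next
  assume "P 1 \<and> P (n+1) \<and> (\<forall>l\<in>{2..n}. P l)"
  then show "\<forall>l\<in>{1..n+1}. P l" using labS by blast
qed

lemma zsetS_eq:
  assumes n: "n \<ge> 1" and Z: "Z \<subseteq> {1..n+1}"
  shows "zsetS n p = Z \<longleftrightarrow> ((inA n p \<longleftrightarrow> 1\<in>Z) \<and> (inO n p \<longleftrightarrow> n+1\<in>Z) \<and> (\<forall>l\<in>{2..n}. inB l p \<longleftrightarrow> l\<in>Z))"
proof -
  have "zsetS n p = Z \<longleftrightarrow> (\<forall>l\<in>{1..n+1}. p \<in> RS n l \<longleftrightarrow> l \<in> Z)"
    using Z unfolding zsetS_def by auto
  also have "\<dots> \<longleftrightarrow> ((inA n p \<longleftrightarrow> 1\<in>Z) \<and> (inO n p \<longleftrightarrow> n+1\<in>Z) \<and> (\<forall>l\<in>{2..n}. inB l p \<longleftrightarrow> l\<in>Z))"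
    unfolding ballS[OF n] memS_A[OF n] memS_O by (simp add: memS_B)
  finally show ?thesis .
qed

lemma zS_empty: "n \<ge> 1 \<Longrightarrow> zsetS n p = {} \<longleftrightarrow> \<not> inO n p"
  by (subst zsetS_eq) (auto dest: A_O B_O)

lemma zS_N: "n \<ge> 1 \<Longrightarrow> zsetS n p = {n+1} \<longleftrightarrow> inO n p \<and> \<not> inA n p \<and> (\<forall>j\<in>{2..n}. \<not> inB j p)"
  by (subst zsetS_eq) auto

lemma zS_1N: "n \<ge> 1 \<Longrightarrow> zsetS n p = {1,n+1} \<longleftrightarrow> inA n p \<and> (\<forall>j\<in>{2..n}. \<not> inB j p)"
  by (subst zsetS_eq) (auto dest: A_O)

lemma zS_1jN: "n \<ge> 1 \<Longrightarrow> j \<in> {2..n} \<Longrightarrow> zsetS n p = {1,j,n+1} \<longleftrightarrow> inA n p \<and> inB j p"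
  by (subst zsetS_eq) (auto dest: A_O B_uniq)

lemma zS_jN: "n \<ge> 1 \<Longrightarrow> j \<in> {2..n} \<Longrightarrow> zsetS n p = {j,n+1} \<longleftrightarrow> inB j p \<and> \<not> inA n p"
  by (subst zsetS_eq) (auto dest: B_O B_uniq)

definition ZS :: "nat \<Rightarrow> nat set set" where
  "ZS n = {{}, {n+1}, {1,n+1}} \<union> (\<lambda>j. {1,j,n+1}) ` {2..n} \<union> (\<lambda>j. {j,n+1}) ` {2..n}"

lemma zS_range: "n \<ge> 1 \<Longrightarrow> zsetS n p \<in> ZS n"
proof -
  assume n: "n \<ge> 1"
  show ?thesis
  proof (cases "inO n p")
    case False then have "zsetS n p = {}" using zS_empty[OF n] by simp
    then show ?thesis by (simp add: ZS_def)
  next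
    case True
    show ?thesis
    proof (cases "\<exists>j\<in>{2..n}. inB j p")
      case True
      then obtain j where j: "j \<in> {2..n}" "inB j p" by blast
      show ?thesis
      proof (cases "inA n p")
        case True then have "zsetS n p = {1,j,n+1}" using zS_1jN[OF n j(1)] j by simp
        then show ?thesis using j(1) unfolding ZS_def by simp
      next
        case False then have "zsetS n p = {j,n+1}" using zS_jN[OF n j(1)] j by simp
        then show ?thesis using j(1) unfolding ZS_def by simp
      qed
    next
      case False
      show ?thesis
      proof (cases "inA n p")
        case True then have "zsetS n p = {1,n+1}" using zS_1N[OF n] False by simp
        then show ?thesis unfolding ZS_def by simp
      next
        case F2: False then have "zsetS n p = {n+1}" using zS_N[OF n] False \<open>inO n p\<close> by simp
        then show ?thesis unfolding ZS_def by simp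
      qed
    qed
  qed
qed



lemma zS_range_eq: "n \<ge> 1 \<Longrightarrow> range (zsetS n) = ZS n"
proof
  assume n: "n \<ge> 1"
  show "range (zsetS n) \<subseteq> ZS n" using zS_range[OF n] by auto
  have rn: "real n \<ge> 1" using n by simp
  show "ZS n \<subseteq> range (zsetS n)"
  proof
    fix Z assume "Z \<in> ZS n"
    then consider "Z = {}" | "Z = {n+1}" | "Z = {1,n+1}" | j where "j\<in>{2..n}" "Z = {1,j,n+1}"
      | j where "j\<in>{2..n}" "Z = {j,n+1}" unfolding ZS_def by blast
    then show "Z \<in> range (zsetS n)"
    proof cases
      case 1
      have "zsetS n (Complex (-1) (-1)) = {}" using zS_empty[OF n] by (simp add: inO_def)
      then show ?thesis using 1 by (metis rangeI)
    next
      case 2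
      have "zsetS n (Complex (1/2) (1/2)) = {n+1}" using zS_N[OF n] rn by (simp add: inO_def inA_def inB_def)
      then show ?thesis using 2 by (metis rangeI)
    next
      case 3
      have "zsetS n (Complex (3/2) (3/2)) = {1,n+1}" using zS_1N[OF n] rn by (simp add: inO_def inA_def inB_def)
      then show ?thesis using 3 by (metis rangeI)
    next
      case (4 j)
      then have "real j \<ge> 2" "real j \<le> real n" by auto
      then have "zsetS n (Complex (2*real j - 3/2) (5/2)) = {1,j,n+1}" using zS_1jN[OF n 4(1)]
        by (simp add: inO_def inA_def inB_def)
      then show ?thesis using 4 by (metis rangeI)
    next
      case (5 j)
      then have "real j \<ge> 2" "real j \<le> real n" by auto
      then have "zsetS n (Complex (2*real j - 3/2) (7/2)) = {j,n+1}" using zS_jN[OF n 5(1)]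
        by (simp add: inO_def inA_def inB_def)
      then show ?thesis using 5 by (metis rangeI)
    qed
  qed
qed

lemma betw: "min a b \<le> t \<Longrightarrow> t \<le> max a b \<Longrightarrow> lo < a \<Longrightarrow> lo < b \<Longrightarrow> a < hi \<Longrightarrow> b < hi \<Longrightarrow> lo < t \<and> t < (hi::real)"
  by (auto simp: min_def max_def split: if_splits)

lemma segb:
  assumes "u \<in> closed_segment x y"
  shows "min (Re x) (Re y) \<le> Re u" "Re u \<le> max (Re x) (Re y)"
        "min (Im x) (Im y) \<le> Im u" "Im u \<le> max (Im x) (Im y)"
  using seg_bounds[OF assms] by auto

lemma segV:
  assumes "u \<in> closed_segment x (Complex (Re x) c)"
  shows "Re u = Re x" "min (Im x) c \<le> Im u" "Im u \<le> max (Im x) c"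
  using segb[OF assms] by auto

lemma segH:
  assumes "u \<in> closed_segment (Complex a c) (Complex b c)"
  shows "Im u = c" "min a b \<le> Re u" "Re u \<le> max a b"
  using segb[OF assms] by auto

lemma conn_S_N:
  assumes n: "n \<ge> 1"
  shows "connected {p. zsetS n p = {n+1}}"
proof -
  let ?S = "{p. zsetS n p = {n+1}}"
  have S: "?S = {p. inO n p \<and> \<not> inA n p \<and> (\<forall>j\<in>{2..n}. \<not> inB j p)}" using zS_N[OF n] by auto
  have rn: "real n \<ge> 1" using n by simp
  let ?T = "closed_segment (Complex (1/2) (1/2)) (Complex (1/2) (9/2))"
  have TS: "?T \<subseteq> ?S" unfolding S
  proof
    fix u assume u: "u \<in> ?T"
    have b: "Re u = 1/2" "1/2 \<le> Im u" "Im u \<le> 9/2" using segb[OF u] by auto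
    have "\<not> inB j u" if "j \<in> {2..n}" for j
    proof -
      have "real j \<ge> 2" using that by auto
      then show ?thesis using b unfolding inB_def by auto
    qed
    then show "u \<in> {p. inO n p \<and> \<not> inA n p \<and> (\<forall>j\<in>{2..n}. \<not> inB j p)}"
      using b rn by (auto simp: inO_def inA_def)
  qed
  show ?thesis
  proof (rule conn_hub[OF connected_segment TS])
    fix x assume "x \<in> ?S"
    then have x: "inO n x" "\<not> inA n x" "\<And>j. j\<in>{2..n} \<Longrightarrow> \<not> inB j x" unfolding S by auto
    show "\<exists>y z. z \<in> ?T \<and> closed_segment x y \<subseteq> ?S \<and> closed_segment y z \<subseteq> ?S"
    proof (cases "Im x < 3")
      case True
      let ?y = "Complex (Re x) (1/2)" and ?z = "Complex (1/2) (1/2)"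
      have 1: "closed_segment x ?y \<subseteq> ?S" unfolding S
      proof
        fix u assume u: "u \<in> closed_segment x ?y"
        note b = segV[OF u]
        have "\<not> inB j u" if j: "j \<in> {2..n}" for j
        proof
          assume "inB j u"
          then have "2 < Im u" "2*real j-2 < Re x" "Re x < 2*real j-1" using b unfolding inB_def by auto
          then have "inB j x" using b True unfolding inB_def by (auto simp: min_def max_def split: if_splits)
          then show False using x(3)[OF j] by simp
        qed
        moreover have "\<not> inA n u"
        proof
          assume "inA n u"
          then have "1 < Im u" "1 < Re x" "Re x < 2*real n+1" using b unfolding inA_def by auto
          then have "inA n x" using b True unfolding inA_def by (auto simp: min_def max_def split: if_splits)
          then show False using x(2) by simp
        qed
        moreover have "inO n u" using x(1) b True unfolding inO_def by (auto simp: min_def max_def split: if_splits)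
        ultimately show "u \<in> {p. inO n p \<and> \<not> inA n p \<and> (\<forall>j\<in>{2..n}. \<not> inB j p)}" by auto
      qed
      have 2: "closed_segment ?y ?z \<subseteq> ?S" unfolding S
      proof
        fix u assume u: "u \<in> closed_segment ?y ?z"
        note b = segH[OF u]
        have "\<not> inB j u" for j using b unfolding inB_def by auto
        moreover have "\<not> inA n u" using b unfolding inA_def by auto
        moreover have "inO n u" using x(1) b unfolding inO_def by (auto simp: min_def max_def split: if_splits)
        ultimately show "u \<in> {p. inO n p \<and> \<not> inA n p \<and> (\<forall>j\<in>{2..n}. \<not> inB j p)}" by auto
      qed
      have "?z \<in> ?T" by simp
      then show ?thesis using 1 2 by blast
    next
      case False
      let ?y = "Complex (Re x) (9/2)" and ?z = "Complex (1/2) (9/2)"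
      have 1: "closed_segment x ?y \<subseteq> ?S" unfolding S
      proof
        fix u assume u: "u \<in> closed_segment x ?y"
        note b = segV[OF u]
        have xi: "Im x < 5" using x(1) unfolding inO_def by auto
        have "\<not> inB j u" if j: "j \<in> {2..n}" for j
        proof
          assume "inB j u"
          then have "Im u < 4" "2*real j-2 < Re x" "Re x < 2*real j-1" using b unfolding inB_def by auto
          then have "inB j x" using b False xi unfolding inB_def by (auto simp: min_def max_def split: if_splits)
          then show False using x(3)[OF j] by simp
        qed
        moreover have "\<not> inA n u" using b False xi unfolding inA_def by (auto simp: min_def max_def split: if_splits)
        moreover have "inO n u" using x(1) b False unfolding inO_def by (auto simp: min_def max_def split: if_splits)
        ultimately show "u \<in> {p. inO n p \<and> \<not> inA n p \<and> (\<forall>j\<in>{2..n}. \<not> inB j p)}" by auto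
      qed
      have 2: "closed_segment ?y ?z \<subseteq> ?S" unfolding S
      proof
        fix u assume u: "u \<in> closed_segment ?y ?z"
        note b = segH[OF u]
        have "\<not> inB j u" for j using b unfolding inB_def by auto
        moreover have "\<not> inA n u" using b unfolding inA_def by auto
        moreover have "inO n u" using x(1) b unfolding inO_def by (auto simp: min_def max_def split: if_splits)
        ultimately show "u \<in> {p. inO n p \<and> \<not> inA n p \<and> (\<forall>j\<in>{2..n}. \<not> inB j p)}" by auto
      qed
      have "?z \<in> ?T" by simp
      then show ?thesis using 1 2 by blast
    qed
  qed
qed


lemma conn_S_1N:
  assumes n: "n \<ge> 1"
  shows "connected {p. zsetS n p = {1,n+1}}"
proof -
  let ?S = "{p. zsetS n p = {1,n+1}}"
  let ?P = "{p. inA n p \<and> (\<forall>j\<in>{2..n}. \<not> inB j p)}"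
  have S: "?S = ?P" using zS_1N[OF n] by auto
  have rn: "real n \<ge> 1" using n by simp
  let ?c = "Complex (3/2) (3/2)"
  have TS: "{?c} \<subseteq> ?S" unfolding S using rn by (auto simp: inA_def inB_def)
  show ?thesis
  proof (rule conn_hub[OF connected_sing TS])
    fix x assume "x \<in> ?S"
    then have x: "inA n x" "\<And>j. j\<in>{2..n} \<Longrightarrow> \<not> inB j x" unfolding S by auto
    let ?y = "Complex (Re x) (3/2)"
    have 1: "closed_segment x ?y \<subseteq> ?S" unfolding S
    proof
      fix u assume u: "u \<in> closed_segment x ?y"
      note b = segV[OF u]
      have "\<not> inB j u" if j: "j \<in> {2..n}" for j
      proof
        assume "inB j u"
        then have "2 < Im u" "Im u < 4" "2*real j-2 < Re x" "Re x < 2*real j-1" using b unfolding inB_def by auto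
        then have "inB j x" using b x(1) unfolding inB_def inA_def by (auto simp: min_def max_def split: if_splits)
        then show False using x(2)[OF j] by simp
      qed
      moreover have "inA n u" using x(1) b unfolding inA_def by (auto simp: min_def max_def split: if_splits)
      ultimately show "u \<in> ?P" by auto
    qed
    have 2: "closed_segment ?y ?c \<subseteq> ?S" unfolding S
    proof
      fix u assume u: "u \<in> closed_segment ?y ?c"
      note b = segH[OF u]
      have "\<not> inB j u" if "j \<in> {2..n}" for j using b unfolding inB_def by auto
      moreover have "inA n u"
      proof -
        have "min (Re x) (3/2) \<le> Re u" "Re u \<le> max (Re x) (3/2)" using b by auto
        moreover have "(3/2::real) < 2*real n+1" using rn by linarith
        ultimately have "1 < Re u \<and> Re u < 2*real n+1" using x(1) unfolding inA_def
          by (intro betw[of "Re x" "3/2" "Re u" 1 "2*real n+1"]) auto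
        then show ?thesis using b unfolding inA_def by simp
      qed
      ultimately show "u \<in> ?P" by auto
    qed
    show "\<exists>y z. z \<in> {?c} \<and> closed_segment x y \<subseteq> ?S \<and> closed_segment y z \<subseteq> ?S"
      using 1 2 by blast
  qed
qed

lemma conn_S_1jN:
  assumes n: "n \<ge> 1" and j: "j \<in> {2..n}"
  shows "connected {p. zsetS n p = {1,j,n+1}}"
proof -
  let ?S = "{p. zsetS n p = {1,j,n+1}}"
  let ?P = "{p. inA n p \<and> inB j p}"
  have S: "?S = ?P" using zS_1jN[OF n j] by auto
  have rj: "real j \<ge> 2" "real j \<le> real n" using j by auto
  let ?c = "Complex (2*real j - 3/2) (5/2)"
  have TS: "{?c} \<subseteq> ?S" unfolding S using rj by (auto simp: inA_def inB_def)
  show ?thesis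
  proof (rule conn_hub[OF connected_sing TS])
    fix x assume "x \<in> ?S"
    then have x: "inA n x" "inB j x" unfolding S by auto
    have 1: "closed_segment x x \<subseteq> ?S" using \<open>x \<in> ?S\<close> by simp
    have 2: "closed_segment x ?c \<subseteq> ?S" unfolding S
    proof
      fix u assume u: "u \<in> closed_segment x ?c"
      note b = segb[OF u]
      have "inA n u" using x b rj unfolding inA_def inB_def by (auto simp: min_def max_def split: if_splits)
      moreover have "inB j u" using x b rj unfolding inA_def inB_def by (auto simp: min_def max_def split: if_splits)
      ultimately show "u \<in> ?P" by auto
    qed
    show "\<exists>y z. z \<in> {?c} \<and> closed_segment x y \<subseteq> ?S \<and> closed_segment y z \<subseteq> ?S"
      using 1 2 by blast
  qed
qed

lemma conn_S_jN:
  assumes n: "n \<ge> 1" and j: "j \<in> {2..n}"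
  shows "connected {p. zsetS n p = {j,n+1}}"
proof -
  let ?S = "{p. zsetS n p = {j,n+1}}"
  let ?P = "{p. inB j p \<and> \<not> inA n p}"
  have S: "?S = ?P" using zS_jN[OF n j] by auto
  have rj: "real j \<ge> 2" "real j \<le> real n" using j by auto
  let ?c = "Complex (2*real j - 3/2) (7/2)"
  have TS: "{?c} \<subseteq> ?S" unfolding S using rj by (auto simp: inA_def inB_def)
  show ?thesis
  proof (rule conn_hub[OF connected_sing TS])
    fix x assume "x \<in> ?S"
    then have x: "inB j x" "\<not> inA n x" unfolding S by auto
    have x3: "Im x \<ge> 3" using x rj unfolding inA_def inB_def by auto
    have 1: "closed_segment x x \<subseteq> ?S" using \<open>x \<in> ?S\<close> by simp
    have 2: "closed_segment x ?c \<subseteq> ?S" unfolding S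
    proof
      fix u assume u: "u \<in> closed_segment x ?c"
      note b = segb[OF u]
      have "\<not> inA n u" using x3 b unfolding inA_def by (auto simp: min_def max_def split: if_splits)
      moreover have "inB j u" using x b rj unfolding inB_def by (auto simp: min_def max_def split: if_splits)
      ultimately show "u \<in> ?P" by auto
    qed
    show "\<exists>y z. z \<in> {?c} \<and> closed_segment x y \<subseteq> ?S \<and> closed_segment y z \<subseteq> ?S"
      using 1 2 by blast
  qed
qed

lemma conn_S_empty:
  assumes n: "n \<ge> 1"
  shows "connected {p. zsetS n p = {}}"
proof -
  have "{p. zsetS n p = {}} = - rect 0 (2*real n+2) 0 5"
    using zS_empty[OF n] by (auto simp: mem_rect inO_def)
  moreover have "connected (- rect 0 (2*real n+2) 0 5)"
    unfolding rect_def by (rule connected_complement_bounded_convex) (auto simp: bounded_box convex_box)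
  ultimately show ?thesis by simp
qed

lemma conn_S: "n \<ge> 1 \<Longrightarrow> Z \<in> ZS n \<Longrightarrow> connected {p. zsetS n p = Z}"
  unfolding ZS_def using conn_S_empty conn_S_N conn_S_1N conn_S_1jN conn_S_jN by auto



lemma fr_OA: "n \<ge> 1 \<Longrightarrow> p \<in> frontier (RS n (n+1)) \<Longrightarrow> p \<in> frontier (RS n 1) \<Longrightarrow> False"
  unfolding frS_O frS_A inO_def inA_def by auto

lemma fr_OB: "j \<in> {2..n} \<Longrightarrow> p \<in> frontier (RS n (n+1)) \<Longrightarrow> p \<in> frontier (RS n j) \<Longrightarrow> False"
proof -
  assume j: "j \<in> {2..n}" and a: "p \<in> frontier (RS n (n+1))" "p \<in> frontier (RS n j)"
  have rj: "real j \<ge> 2" "real j \<le> real n" using j by auto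
  have "j \<noteq> 1" "j \<noteq> n+1" using j by auto
  then show False using a rj unfolding frS_O frS_B[OF \<open>j \<noteq> 1\<close> \<open>j \<noteq> n+1\<close>] inO_def inB_def by auto
qed

lemma fr_AB: "j \<in> {2..n} \<Longrightarrow> p \<in> frontier (RS n 1) \<Longrightarrow> p \<in> frontier (RS n j) \<Longrightarrow>
   p \<in> {Complex (2*real j-2) 3, Complex (2*real j-1) 3}"
proof -
  assume j: "j \<in> {2..n}" and a: "p \<in> frontier (RS n 1)" "p \<in> frontier (RS n j)"
  have rj: "real j \<ge> 2" "real j \<le> real n" using j by auto
  have n: "n \<ge> 1" using j by auto
  have "j \<noteq> 1" "j \<noteq> n+1" using j by auto
  then have b: "1 \<le> Re p" "Re p \<le> 2*real n+1" "1 \<le> Im p" "Im p \<le> 3" "\<not> inA n p"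
    "2*real j-2 \<le> Re p" "Re p \<le> 2*real j-1" "2 \<le> Im p" "Im p \<le> 4" "\<not> inB j p"
    using a unfolding frS_A[OF n] frS_B[OF \<open>j \<noteq> 1\<close> \<open>j \<noteq> n+1\<close>] by auto
  have i3: "Im p = 3" using b(1-5) b(6-9) rj unfolding inA_def by auto
  have "Re p = 2*real j-2 \<or> Re p = 2*real j-1" using b(6-10) i3 unfolding inB_def by auto
  then show ?thesis using i3 by (auto simp: complex_eq_iff)
qed

lemma fr_BB: "j \<in> {2..n} \<Longrightarrow> k \<in> {2..n} \<Longrightarrow> j \<noteq> k \<Longrightarrow> p \<in> frontier (RS n j) \<Longrightarrow> p \<in> frontier (RS n k) \<Longrightarrow> False"
proof -
  assume j: "j \<in> {2..n}" and k: "k \<in> {2..n}" "j \<noteq> k" and a: "p \<in> frontier (RS n j)" "p \<in> frontier (RS n k)"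
  have "j \<noteq> 1" "j \<noteq> n+1" "k \<noteq> 1" "k \<noteq> n+1" using j k by auto
  then have "2*real j-2 \<le> Re p" "Re p \<le> 2*real j-1" "2*real k-2 \<le> Re p" "Re p \<le> 2*real k-1"
    using a frS_B by auto
  then show False using uniqS k(2) by blast
qed

definition PS :: "nat \<Rightarrow> complex set" where
  "PS l = {Complex (2*real l-2) 3, Complex (2*real l-1) 3}"

lemma fr_pair:
  assumes n: "n \<ge> 1" and l: "l \<in> {1..n+1}" and l': "l' \<in> {1..n+1}" and ne: "l \<noteq> l'"
  shows "frontier (RS n l) \<inter> frontier (RS n l') \<subseteq> PS l \<union> PS l'"
proof
  fix p assume p: "p \<in> frontier (RS n l) \<inter> frontier (RS n l')"
  then have p1: "p \<in> frontier (RS n l)" and p2: "p \<in> frontier (RS n l')" by auto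
  consider "l = 1" | "l = n+1" | "l \<in> {2..n}" using labS[OF l] by blast
  then show "p \<in> PS l \<union> PS l'"
  proof cases
    case 1
    consider "l' = n+1" | "l' \<in> {2..n}" using labS[OF l'] ne 1 by blast
    then show ?thesis
    proof cases
      case a: 1 then show ?thesis using fr_OA[OF n, of p] p1 p2 by (simp add: 1 a)
    next
      case a: 2 then show ?thesis using fr_AB[OF a, of p] p1 p2 by (auto simp: 1 PS_def)
    qed
  next
    case 2
    consider "l' = 1" | "l' \<in> {2..n}" using labS[OF l'] ne 2 by blast
    then show ?thesis
    proof cases
      case a: 1 then show ?thesis using fr_OA[OF n, of p] p1 p2 by (simp add: 2 a)
    next
      case a: 2 then show ?thesis using fr_OB[OF a, of p] p1 p2 by (simp add: 2)
    qed
  next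
    case 3
    consider "l' = 1" | "l' = n+1" | "l' \<in> {2..n}" using labS[OF l'] by blast
    then show ?thesis
    proof cases
      case a: 1 then show ?thesis using fr_AB[OF 3, of p] p1 p2 by (simp add: a PS_def)
    next
      case a: 2 then show ?thesis using fr_OB[OF 3, of p] p1 p2 by (simp add: a)
    next
      case a: 3 then show ?thesis using fr_BB[OF 3 a ne, of p] p1 p2 by simp
    qed
  qed
qed

lemma card_S: "n \<ge> 1 \<Longrightarrow> \<exists>u v. {l\<in>{1..n+1}. p \<in> frontier (RS n l)} \<subseteq> {u,v}"
proof -
  assume n: "n \<ge> 1"
  show ?thesis
  proof (cases "\<exists>j\<in>{2..n}. p \<in> frontier (RS n j)")
    case True
    then obtain j where j: "j \<in> {2..n}" "p \<in> frontier (RS n j)" by blast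
    have "{l\<in>{1..n+1}. p \<in> frontier (RS n l)} \<subseteq> {1, j}"
    proof
      fix l assume "l \<in> {l\<in>{1..n+1}. p \<in> frontier (RS n l)}"
      then have l: "l \<in> {1..n+1}" "p \<in> frontier (RS n l)" by auto
      show "l \<in> {1,j}" using labS[OF l(1)] l(2) j fr_OB fr_BB by blast
    qed
    then show ?thesis by blast
  next
    case False
    have "{l\<in>{1..n+1}. p \<in> frontier (RS n l)} \<subseteq> {1, n+1}"
    proof
      fix l assume "l \<in> {l\<in>{1..n+1}. p \<in> frontier (RS n l)}"
      then have l: "l \<in> {1..n+1}" "p \<in> frontier (RS n l)" by auto
      show "l \<in> {1,n+1}" using labS[OF l(1)] l(2) False by blast
    qed
    then show ?thesis by blast
  qed
qed

lemma wf_S: "n \<ge> 1 \<Longrightarrow> well_formed ({1..n+1}, ZS n)"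
proof -
  assume n: "n \<ge> 1"
  have rn: "real n \<ge> 1" using n by simp
  show ?thesis
  proof (rule wf_rects[where R = "RS n"])
    show "finite {1..n+1}" by simp
    fix l assume l: "l \<in> {1..n+1}"
    have "RS n l = rect 0 (2*real n+2) 0 5 \<or> RS n l = rect 1 (2*real n+1) 1 3 \<or>
          RS n l = rect (2*real l-2) (2*real l-1) 2 4" by (simp add: RS_def)
    moreover have "(0::real) < 2*real n+2" "(1::real) < 2*real n+1" "2*real l-2 < 2*real l-1" using rn by auto
    ultimately show "\<exists>a b c d. a<b \<and> c<d \<and> RS n l = rect a b c d"
    proof (elim disjE)
      assume "RS n l = rect 0 (2*real n+2) 0 5"
      then show ?thesis using \<open>(0::real) < 2*real n+2\<close> by (intro exI[of _ 0] exI[of _ "2*real n+2"] exI[of _ 0] exI[of _ 5]) simp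
    next
      assume "RS n l = rect 1 (2*real n+1) 1 3"
      then show ?thesis using \<open>(1::real) < 2*real n+1\<close> by (intro exI[of _ 1] exI[of _ "2*real n+1"] exI[of _ 1] exI[of _ 3]) simp
    next
      assume "RS n l = rect (2*real l-2) (2*real l-1) 2 4"
      then show ?thesis by (intro exI[of _ "2*real l-2"] exI[of _ "2*real l-1"] exI[of _ 2] exI[of _ 4]) simp
    qed
  next
    fix l l' assume "l \<in> {1..n+1}" "l' \<in> {1..n+1}" "l \<noteq> l'"
    then show "finite (frontier (RS n l) \<inter> frontier (RS n l'))"
      using fr_pair[OF n] finite_subset[of _ "PS l \<union> PS l'"] by (simp add: PS_def)
  next
    fix p show "\<exists>u v. {l\<in>{1..n+1}. p \<in> frontier (RS n l)} \<subseteq> {u,v}" using card_S[OF n] .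
  next
    show "range (\<lambda>p. {l\<in>{1..n+1}. p \<in> RS n l}) = ZS n" using zS_range_eq[OF n] unfolding zsetS_def .
  next
    fix Z assume "Z \<in> ZS n"
    then show "connected {p. {l\<in>{1..n+1}. p \<in> RS n l} = Z}" using conn_S[OF n] unfolding zsetS_def by blast
  qed
qed



definition ind :: "nat \<Rightarrow> nat set \<Rightarrow> nat list" where
  "ind m A = map (\<lambda>j. if j \<in> A then 1 else 0) [1..<m+1]"

lemma unit_ind: "unit_vec m i = ind m {i}"
  unfolding unit_vec_def ind_def by simp

lemma zero_ind: "zero_word m = ind m {}"
  unfolding zero_word_def ind_def by (simp add: map_replicate_const)

lemma vadd_ind: "A \<inter> B = {} \<Longrightarrow> vadd (ind m A) (ind m B) = ind m (A \<union> B)"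
  unfolding vadd_def ind_def by (auto simp: map2_map_map)

lemma len_ind: "length (ind m A) = m"
  unfolding ind_def by simp

lemma set_ind: "set (ind m A) \<subseteq> {0,1}"
  unfolding ind_def by auto

lemma supp_ind: "{i\<in>{1..m}. ind m A ! (i-1) = 1} = A \<inter> {1..m}"
proof -
  have H: "ind m A ! (i-1) = (if i \<in> A then 1 else 0)" if "i \<in> {1..m}" for i
  proof -
    have i: "i - 1 < m" "1 \<le> i" using that by auto
    have "[1..<m+1] ! (i-1) = i" using i by (simp del: upt_Suc)
    moreover have "ind m A ! (i-1) = (\<lambda>j. if j \<in> A then 1 else 0) ([1..<m+1] ! (i-1))"
      unfolding ind_def using i by (intro nth_map) simp
    ultimately show ?thesis by simp
  qed
  show ?thesis
  proof (intro set_eqI iffI)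
    fix x assume "x \<in> {i\<in>{1..m}. ind m A ! (i-1) = 1}"
    then have "x \<in> {1..m}" "ind m A ! (x-1) = 1" by auto
    then show "x \<in> A \<inter> {1..m}" using H[of x] by (cases "x \<in> A") auto
  next
    fix x assume "x \<in> A \<inter> {1..m}" then show "x \<in> {i\<in>{1..m}. ind m A ! (i-1) = 1}" using H[of x] by auto
  qed
qed

lemma is_code_ind: "{} \<in> F \<Longrightarrow> is_code m (ind m ` F)"
  unfolding is_code_def zero_ind using len_ind set_ind by auto

lemma desc_ind: "(\<forall>A\<in>F. A \<subseteq> {1..m}) \<Longrightarrow> desc m (ind m ` F) = ({1..m}, F)"
proof -
  assume F: "\<forall>A\<in>F. A \<subseteq> {1..m}"
  have "(\<lambda>c. {i\<in>{1..m}. c ! (i - 1) = 1}) ` ind m ` F = (\<lambda>A. A \<inter> {1..m}) ` F"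
    unfolding image_image supp_ind ..
  also have "\<dots> = F" using F by (auto simp: inf.absorb1 image_iff)
  finally show ?thesis unfolding desc_def by simp
qed

definition XS :: "nat \<Rightarrow> nat \<Rightarrow> nat set" where
  "XS n i = (if i < n then {1,i+1,n+1} else if i = n then {1,n+1} else if i < 2*n then {i+1-n,n+1} else {n+1})"

lemma s_word_ind: "n \<ge> 1 \<Longrightarrow> i \<ge> 1 \<Longrightarrow> s_word n i = ind (n+1) (XS n i)"
  unfolding s_word_def XS_def unit_ind
  by (auto simp: vadd_ind insert_commute)

lemma S_code_ind: "n \<ge> 1 \<Longrightarrow> S_code n = ind (n+1) ` ({{}} \<union> XS n ` {1..2*n})"
  unfolding S_code_def zero_ind using s_word_ind by auto

lemma XS_ZS: "n \<ge> 1 \<Longrightarrow> {{}} \<union> XS n ` {1..2*n} = ZS n"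
proof
  assume n: "n \<ge> 1"
  show "{{}} \<union> XS n ` {1..2*n} \<subseteq> ZS n"
  proof
    fix Z assume "Z \<in> {{}} \<union> XS n ` {1..2*n}"
    then consider "Z = {}" | i where "i \<in> {1..2*n}" "Z = XS n i" by blast
    then show "Z \<in> ZS n"
    proof cases
      case 1 then show ?thesis by (simp add: ZS_def)
    next
      case (2 i)
      show ?thesis
      proof (cases "i < n")
        case True
        then have "Z = (\<lambda>j. {1,j,n+1}) (i+1)" "i+1 \<in> {2..n}" using 2 by (auto simp: XS_def)
        then show ?thesis unfolding ZS_def by blast
      next
        case False
        show ?thesis
        proof (cases "i = n")
          case True then show ?thesis using 2 by (simp add: XS_def ZS_def)
        next
          case F2: False
          show ?thesis
          proof (cases "i < 2*n")
            case True
            then have "Z = (\<lambda>j. {j,n+1}) (i+1-n)" "i+1-n \<in> {2..n}" using 2 False F2 by (auto simp: XS_def)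
            then show ?thesis unfolding ZS_def by blast
          next
            case F3: False
            then show ?thesis using 2 False F2 by (simp add: XS_def ZS_def)
          qed
        qed
      qed
    qed
  qed
  show "ZS n \<subseteq> {{}} \<union> XS n ` {1..2*n}"
  proof
    fix Z assume "Z \<in> ZS n"
    then consider "Z = {}" | "Z = {n+1}" | "Z = {1,n+1}" | j where "j\<in>{2..n}" "Z = {1,j,n+1}"
      | j where "j\<in>{2..n}" "Z = {j,n+1}" unfolding ZS_def by blast
    then show "Z \<in> {{}} \<union> XS n ` {1..2*n}"
    proof cases
      case 1 then show ?thesis by simp
    next
      case 2
      have "Z = XS n (2*n)" "2*n \<in> {1..2*n}" using 2 n by (auto simp: XS_def)
      then show ?thesis by blast
    next
      case 3
      have "Z = XS n n" "n \<in> {1..2*n}" using 3 n by (auto simp: XS_def)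
      then show ?thesis by blast
    next
      case (4 j)
      have "Z = XS n (j-1)" "j-1 \<in> {1..2*n}" using 4 n by (auto simp: XS_def)
      then show ?thesis by blast
    next
      case (5 j)
      have "Z = XS n (j-1+n)" "j-1+n \<in> {1..2*n}" using 5 n by (auto simp: XS_def)
      then show ?thesis by blast
    qed
  qed
qed

lemma ZS_sub: "\<forall>A\<in>ZS n. A \<subseteq> {1..n+1}"
  unfolding ZS_def by auto

lemma desc_S: "n \<ge> 1 \<Longrightarrow> desc (n+1) (S_code n) = ({1..n+1}, ZS n)"
  using S_code_ind XS_ZS desc_ind ZS_sub by metis

lemma is_code_S: "n \<ge> 1 \<Longrightarrow> is_code (n+1) (S_code n)"
proof -
  assume "n \<ge> 1"
  then have "S_code n = ind (n+1) ` ({{}} \<union> XS n ` {1..2*n})" by (rule S_code_ind)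
  moreover have "is_code (n+1) (ind (n+1) ` ({{}} \<union> XS n ` {1..2*n}))" by (rule is_code_ind) simp
  ultimately show ?thesis by simp
qed



lemma Yset_empty: "Yset Z {} = {Z}"
  unfolding Yset_def by auto

lemma Yset_single: "Yset Z {a} = {Z, insert a Z}"
  unfolding Yset_def by (auto simp: subset_singleton_iff)

lemma pierce0:
  assumes "l \<in> L" "Z \<in> Zs" "l \<notin> Z" "Xset Zs l = {insert l Z}"
  shows "is_piercing 0 L Zs {} l"
  unfolding is_piercing_def using assms by (auto simp: Yset_empty)

lemma pierce1:
  assumes "l \<in> L" "a \<in> L" "a \<noteq> l" "Z \<in> Zs" "l \<notin> Z" "a \<notin> Z" "insert a Z \<in> Zs"
    "Xset Zs l = {insert l Z, insert a (insert l Z)}"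
  shows "is_piercing 1 L Zs {a} l"
  unfolding is_piercing_def using assms by (auto simp: Yset_single)

lemma kip_step0:
  assumes "l \<in> L" "Z \<in> Zs" "l \<notin> Z" "Xset Zs l = {insert l Z}"
    "k_ind_pierced 1 (L - {l}, (\<lambda>Z. Z - {l}) ` Zs)"
  shows "k_ind_pierced 1 (L, Zs)"
  using k_ind_pierced.step[of 0 1 "(L,Zs)" "{}" l] pierce0[OF assms(1-4)] assms(5)
  by (simp add: remove_label_def)

lemma kip_step1:
  assumes "l \<in> L" "a \<in> L" "a \<noteq> l" "Z \<in> Zs" "l \<notin> Z" "a \<notin> Z" "insert a Z \<in> Zs"
    "Xset Zs l = {insert l Z, insert a (insert l Z)}"
    "k_ind_pierced 1 (L - {l}, (\<lambda>Z. Z - {l}) ` Zs)"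
  shows "k_ind_pierced 1 (L, Zs)"
  using k_ind_pierced.step[of 1 1 "(L,Zs)" "{a}" l] pierce1[OF assms(1-8)] assms(9)
  by (simp add: remove_label_def)

lemma kip_base:
  assumes "N \<noteq> (a::nat)"
  shows "k_ind_pierced 1 ({a,N}, {{},{N},{a,N}})"
proof (rule kip_step0[of a _ "{N}"])
  show "Xset {{}, {N}, {a, N}} a = {insert a {N}}" using assms by (auto simp: Xset_def)
  have "{a,N} - {a} = {N}" "(\<lambda>Z. Z - {a}) ` {{}, {N}, {a, N}} = {{},{N}}" using assms by auto
  moreover have "k_ind_pierced 1 ({N}, {{},{N}})"
  proof (rule kip_step0[of N _ "{}"])
    show "Xset {{}, {N}} N = {insert N {}}" by (auto simp: Xset_def)
    have "{N} - {N} = {}" "(\<lambda>Z. Z - {N}) ` {{}, {N}} = {{}}" by auto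
    then show "k_ind_pierced 1 ({N} - {N}, (\<lambda>Z. Z - {N}) ` {{}, {N}})"
      using k_ind_pierced.empty by simp
  qed auto
  ultimately show "k_ind_pierced 1 ({a, N} - {a}, (\<lambda>Z. Z - {a}) ` {{}, {N}, {a, N}})" by simp
qed (use assms in auto)

definition LSk :: "nat \<Rightarrow> nat \<Rightarrow> nat set" where
  "LSk N k = {1,N} \<union> {2..k}"
definition ZSk :: "nat \<Rightarrow> nat \<Rightarrow> nat set set" where
  "ZSk N k = {{}, {N}, {1,N}} \<union> (\<lambda>j. {1,j,N}) ` {2..k} \<union> (\<lambda>j. {j,N}) ` {2..k}"

lemma ZSk_Suc: "Suc k \<ge> 2 \<Longrightarrow> ZSk N (Suc k) = insert {1,Suc k,N} (insert {Suc k,N} (ZSk N k))"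
proof -
  assume "Suc k \<ge> 2"
  then have "{2..Suc k} = insert (Suc k) {2..k}" by auto
  then show ?thesis unfolding ZSk_def by auto
qed

lemma ZSk_sub: "Z \<in> ZSk N k \<Longrightarrow> Z \<subseteq> LSk N k"
  unfolding ZSk_def LSk_def by auto

lemma LSk_notin: "Suc k \<noteq> 1 \<Longrightarrow> Suc k \<noteq> N \<Longrightarrow> Suc k \<notin> LSk N k"
  unfolding LSk_def by auto

lemma ZSk_img: "Suc k \<noteq> 1 \<Longrightarrow> Suc k \<noteq> N \<Longrightarrow> (\<lambda>Z. Z - {Suc k}) ` ZSk N k = ZSk N k"
proof -
  assume a: "Suc k \<noteq> 1" "Suc k \<noteq> N"
  have "Z - {Suc k} = Z" if "Z \<in> ZSk N k" for Z
    using ZSk_sub[OF that] LSk_notin[OF a] by blast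
  then show ?thesis by (simp add: image_cong)
qed

lemma ZSk_X: "Suc k \<noteq> 1 \<Longrightarrow> Suc k \<noteq> N \<Longrightarrow> Xset (ZSk N k) (Suc k) = {}"
proof -
  assume a: "Suc k \<noteq> 1" "Suc k \<noteq> N"
  show ?thesis unfolding Xset_def using ZSk_sub LSk_notin[OF a] by blast
qed

lemma kip_S_gen:
  assumes N: "1 < N"
  shows "k < N \<Longrightarrow> k_ind_pierced 1 (LSk N k, ZSk N k)"
proof (induction k)
  case 0
  then have "LSk N 0 = {1,N}" "ZSk N 0 = {{}, {N}, {1,N}}" by (auto simp: LSk_def ZSk_def)
  then show ?case using kip_base[of N 1] N by simp
next
  case (Suc k)
  show ?case
  proof (cases "k = 0")
    case True
    then have "LSk N (Suc k) = {1,N}" "ZSk N (Suc k) = {{}, {N}, {1,N}}" by (auto simp: LSk_def ZSk_def)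
    then show ?thesis using kip_base[of N 1] N by simp
  next
    case False
    let ?l = "Suc k"
    have ih: "k_ind_pierced 1 (LSk N k, ZSk N k)" using Suc by simp
    have l2: "?l \<ge> 2" "?l < N" using False Suc by auto
    have ne: "?l \<noteq> 1" "?l \<noteq> N" using l2 by auto
    have Z: "ZSk N ?l = insert {1,?l,N} (insert {?l,N} (ZSk N k))" using ZSk_Suc[OF l2(1)] .
    have b: "{1,N} \<in> ZSk N k" "{N} \<in> ZSk N k" by (auto simp: ZSk_def)
    show ?thesis
    proof (rule kip_step1[of ?l _ 1 "{N}"])
      show "?l \<in> LSk N ?l" "1 \<in> LSk N ?l" by (auto simp: LSk_def)
      show "1 \<noteq> ?l" "?l \<notin> {N}" "1 \<notin> {N}" using l2 by auto
      show "{N} \<in> ZSk N ?l" "insert 1 {N} \<in> ZSk N ?l" by (auto simp: ZSk_def)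
      have "Xset (ZSk N ?l) ?l = {{1,?l,N}, {?l,N}} \<union> Xset (ZSk N k) ?l"
        unfolding Z Xset_def by auto
      then show "Xset (ZSk N ?l) ?l = {insert ?l {N}, insert 1 (insert ?l {N})}"
        using ZSk_X[OF ne] by auto
      have "LSk N ?l - {?l} = LSk N k" using l2 by (auto simp: LSk_def)
      moreover have "(\<lambda>Z. Z - {?l}) ` ZSk N ?l = ZSk N k"
      proof -
        have "(\<lambda>Z. Z - {?l}) ` ZSk N ?l = insert ({1,?l,N} - {?l}) (insert ({?l,N} - {?l}) ((\<lambda>Z. Z - {?l}) ` ZSk N k))"
          unfolding Z by simp
        also have "\<dots> = insert {1,N} (insert {N} (ZSk N k))" using ne unfolding ZSk_img[OF ne] by auto
        also have "\<dots> = ZSk N k" using b by auto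
        finally show ?thesis .
      qed
      ultimately show "k_ind_pierced 1 (LSk N ?l - {?l}, (\<lambda>Z. Z - {?l}) ` ZSk N ?l)" using ih by simp
    qed
  qed
qed

lemma kip_S: "n \<ge> 1 \<Longrightarrow> k_ind_pierced 1 ({1..n+1}, ZS n)"
proof -
  assume n: "n \<ge> 1"
  have "LSk (n+1) n = {1..n+1}" using n by (auto simp: LSk_def)
  moreover have "ZSk (n+1) n = ZS n" by (simp add: ZSk_def ZS_def)
  moreover have "1 < n+1" using n by simp
  ultimately show ?thesis using kip_S_gen[of "n+1" n] by simp
qed



lemma uniqP: "4*real i + 1 \<le> x \<Longrightarrow> x \<le> 4*real i + 4 \<Longrightarrow> 4*real k + 1 \<le> x \<Longrightarrow> x \<le> 4*real k + 4 \<Longrightarrow> i = k"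
  using nat_sep[of i k] nat_sep[of k i] by (cases "i < k"; cases "k < i") auto

definition pO :: "nat \<Rightarrow> complex \<Rightarrow> bool" where
  "pO n p \<longleftrightarrow> 0 < Re p \<and> Re p < 4*real n+1 \<and> 0 < Im p \<and> Im p < 5"
definition pA :: "nat \<Rightarrow> complex \<Rightarrow> bool" where
  "pA i p \<longleftrightarrow> 4*real i+1 < Re p \<and> Re p < 4*real i+4 \<and> 1 < Im p \<and> Im p < 3"
definition pB :: "nat \<Rightarrow> complex \<Rightarrow> bool" where
  "pB i p \<longleftrightarrow> 4*real i+2 < Re p \<and> Re p < 4*real i+3 \<and> 2 < Im p \<and> Im p < 4"

definition RP :: "nat \<Rightarrow> nat \<Rightarrow> complex set" where
  "RP n l = (if l = 2*n+1 then rect 0 (4*real n+1) 0 5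
     else if odd l then rect (4*real (l div 2)+1) (4*real (l div 2)+4) 1 3
     else rect (4*real ((l-1) div 2)+2) (4*real ((l-1) div 2)+3) 2 4)"

lemma RP_O: "RP n (2*n+1) = rect 0 (4*real n+1) 0 5"
  by (simp add: RP_def)
lemma RP_A: "i < n \<Longrightarrow> RP n (2*i+1) = rect (4*real i+1) (4*real i+4) 1 3"
  by (simp add: RP_def)
lemma RP_B: "RP n (2*i+2) = rect (4*real i+2) (4*real i+3) 2 4"
proof -
  have "2*i+2 \<noteq> 2*n+1" by presburger
  moreover have "\<not> odd (2*i+2)" by simp
  moreover have "(2*i+2-1) div 2 = i" by simp
  ultimately show ?thesis unfolding RP_def by simp
qed

lemma memP_O: "p \<in> RP n (2*n+1) \<longleftrightarrow> pO n p"
  unfolding RP_O mem_rect pO_def ..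
lemma memP_A: "i < n \<Longrightarrow> p \<in> RP n (2*i+1) \<longleftrightarrow> pA i p"
  by (drule RP_A[of i n]) (simp only: mem_rect pA_def)
lemma memP_B: "p \<in> RP n (2*i+2) \<longleftrightarrow> pB i p"
  unfolding RP_B mem_rect pB_def ..

lemma frP_O: "p \<in> frontier (RP n (2*n+1)) \<longleftrightarrow> 0 \<le> Re p \<and> Re p \<le> 4*real n+1 \<and> 0 \<le> Im p \<and> Im p \<le> 5 \<and> \<not> pO n p"
  unfolding RP_O pO_def by (simp add: frontier_rect)
lemma frP_A: "i < n \<Longrightarrow> p \<in> frontier (RP n (2*i+1)) \<longleftrightarrow> 4*real i+1 \<le> Re p \<and> Re p \<le> 4*real i+4 \<and> 1 \<le> Im p \<and> Im p \<le> 3 \<and> \<not> pA i p"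
  by (drule RP_A[of i n]) (simp add: frontier_rect pA_def)
lemma frP_B: "p \<in> frontier (RP n (2*i+2)) \<longleftrightarrow> 4*real i+2 \<le> Re p \<and> Re p \<le> 4*real i+3 \<and> 2 \<le> Im p \<and> Im p \<le> 4 \<and> \<not> pB i p"
  unfolding pB_def RP_B by (simp add: frontier_rect)

lemma labP: "(l::nat) \<in> {1..2*n+1} \<Longrightarrow> l = 2*n+1 \<or> (\<exists>i<n. l = 2*i+1) \<or> (\<exists>i<n. l = 2*i+2)"
proof -
  assume l: "l \<in> {1..2*n+1}"
  show ?thesis
  proof (cases "odd l")
    case True
    then obtain i where i: "l = 2*i+1" by (metis oddE)
    then show ?thesis using l by (cases "i < n") auto
  next
    case False
    then obtain i where i: "l = 2*i" by (metis evenE)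
    then have "i \<ge> 1" using l by auto
    then have "l = 2*(i-1)+2" "i - 1 < n" using i l by auto
    then show ?thesis by blast
  qed
qed

lemma ballP: "(\<forall>l\<in>{1..2*n+1}. P l) \<longleftrightarrow> P (2*n+1) \<and> (\<forall>i<n. P (2*i+1)) \<and> (\<forall>i<n. P (2*i+(2::nat)))"
proof
  assume "\<forall>l\<in>{1..2*n+1}. P l"
  then show "P (2*n+1) \<and> (\<forall>i<n. P (2*i+1)) \<and> (\<forall>i<n. P (2*i+2))" by auto
next
  assume "P (2*n+1) \<and> (\<forall>i<n. P (2*i+1)) \<and> (\<forall>i<n. P (2*i+2))"
  then show "\<forall>l\<in>{1..2*n+1}. P l" using labP by blast
qed

definition zsetP :: "nat \<Rightarrow> complex \<Rightarrow> nat set" where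
  "zsetP n p = {l\<in>{1..2*n+1}. p \<in> RP n l}"

lemma zsetP_eq:
  assumes Z: "Z \<subseteq> {1..2*n+1}"
  shows "zsetP n p = Z \<longleftrightarrow> ((pO n p \<longleftrightarrow> 2*n+1\<in>Z) \<and> (\<forall>i<n. pA i p \<longleftrightarrow> 2*i+1\<in>Z) \<and> (\<forall>i<n. pB i p \<longleftrightarrow> 2*i+2\<in>Z))"
proof -
  have "zsetP n p = Z \<longleftrightarrow> (\<forall>l\<in>{1..2*n+1}. p \<in> RP n l \<longleftrightarrow> l \<in> Z)"
    using Z unfolding zsetP_def by auto
  also have "\<dots> \<longleftrightarrow> ((pO n p \<longleftrightarrow> 2*n+1\<in>Z) \<and> (\<forall>i<n. pA i p \<longleftrightarrow> 2*i+1\<in>Z) \<and> (\<forall>i<n. pB i p \<longleftrightarrow> 2*i+2\<in>Z))"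
    unfolding ballP memP_O memP_B using memP_A by auto
  finally show ?thesis .
qed

lemma pA_uniq: "pA i p \<Longrightarrow> pA k p \<Longrightarrow> i = k"
  unfolding pA_def by (rule uniqP[of i "Re p" k]) auto
lemma pB_uniq: "pB i p \<Longrightarrow> pB k p \<Longrightarrow> i = k"
  unfolding pB_def by (rule uniqP[of i "Re p" k]) auto
lemma pAB_uniq: "pA i p \<Longrightarrow> pB k p \<Longrightarrow> i = k"
  unfolding pA_def pB_def by (rule uniqP[of i "Re p" k]) auto
lemma pA_O: "i < n \<Longrightarrow> pA i p \<Longrightarrow> pO n p"
  using nat_sep[of i n] unfolding pA_def pO_def by auto
lemma pB_O: "i < n \<Longrightarrow> pB i p \<Longrightarrow> pO n p"
  using nat_sep[of i n] unfolding pB_def pO_def by auto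

lemma par3[simp]: "2*k \<noteq> Suc (2*(i::nat))" by presburger
lemma par4[simp]: "Suc (2*k) \<noteq> 2*(i::nat)" by presburger

lemma par1: "2*k+2 \<noteq> 2*i+(1::nat)" by presburger
lemma par2: "2*k+2 \<noteq> 2*n+(1::nat)" by presburger

lemma zP_empty: "zsetP n p = {} \<longleftrightarrow> \<not> pO n p"
  by (subst zsetP_eq) (auto dest: pA_O pB_O)

lemma zP_N: "zsetP n p = {2*n+1} \<longleftrightarrow> pO n p \<and> (\<forall>i<n. \<not> pA i p \<and> \<not> pB i p)"
  by (subst zsetP_eq) (auto simp: par2)

lemma zP_A: "i < n \<Longrightarrow> zsetP n p = {2*i+1,2*n+1} \<longleftrightarrow> pA i p \<and> \<not> pB i p"
  by (subst zsetP_eq) (auto simp: par1 par2 dest: pA_O pA_uniq pAB_uniq)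

lemma zP_AB: "i < n \<Longrightarrow> zsetP n p = {2*i+1,2*i+2,2*n+1} \<longleftrightarrow> pA i p \<and> pB i p"
  by (subst zsetP_eq) (auto simp: par1 par2 dest: pA_O pA_uniq pB_uniq)

lemma zP_B: "i < n \<Longrightarrow> zsetP n p = {2*i+2,2*n+1} \<longleftrightarrow> pB i p \<and> \<not> pA i p"
  by (subst zsetP_eq) (auto simp: par1 par2 dest: pB_O pB_uniq pAB_uniq)



definition ZP :: "nat \<Rightarrow> nat set set" where
  "ZP n = {{}, {2*n+1}} \<union> (\<Union>i\<in>{0..<n}. {{2*i+1,2*n+1}, {2*i+1,2*i+2,2*n+1}, {2*i+2,2*n+1}})"

lemma ZP_mem: "i < n \<Longrightarrow> {2*i+1,2*n+1} \<in> ZP n \<and> {2*i+1,2*i+2,2*n+1} \<in> ZP n \<and> {2*i+2,2*n+1} \<in> ZP n"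
proof -
  assume "i < n"
  then have "i \<in> {0..<n}" by simp
  then show ?thesis unfolding ZP_def by blast
qed

lemma zP_range: "zsetP n p \<in> ZP n"
proof (cases "pO n p")
  case False then have "zsetP n p = {}" using zP_empty by blast
  then show ?thesis by (simp add: ZP_def)
next
  case True
  show ?thesis
  proof (cases "\<exists>i<n. pA i p \<or> pB i p")
    case True
    then obtain i where i: "i < n" "pA i p \<or> pB i p" by blast
    note m = ZP_mem[OF i(1)]
    show ?thesis
    proof (cases "pA i p")
      case A: True
      show ?thesis
      proof (cases "pB i p")
        case True
        then have "zsetP n p = {2*i+1,2*i+2,2*n+1}" using zP_AB[OF i(1), of p] A by blast
        then show ?thesis using m by simp
      next
        case False
        then have "zsetP n p = {2*i+1,2*n+1}" using zP_A[OF i(1), of p] A by blast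
        then show ?thesis using m by simp
      qed
    next
      case False then have "pB i p" using i by simp
      then have "zsetP n p = {2*i+2,2*n+1}" using zP_B[OF i(1), of p] False by blast
      then show ?thesis using m by simp
    qed
  next
    case False
    then have "zsetP n p = {2*n+1}" using zP_N[of n p] \<open>pO n p\<close> by blast
    then show ?thesis by (simp add: ZP_def)
  qed
qed

lemma zP_range_eq: "range (zsetP n) = ZP n"
proof
  show "range (zsetP n) \<subseteq> ZP n" using zP_range by auto
  show "ZP n \<subseteq> range (zsetP n)"
  proof
    fix Z assume "Z \<in> ZP n"
    then consider "Z = {}" | "Z = {2*n+1}" | i where "i<n" "Z = {2*i+1,2*n+1}"
      | i where "i<n" "Z = {2*i+1,2*i+2,2*n+1}" | i where "i<n" "Z = {2*i+2,2*n+1}"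
      unfolding ZP_def by auto
    then show "Z \<in> range (zsetP n)"
    proof cases
      case 1
      have "zsetP n (Complex (-1) (-1)) = {}" using zP_empty by (simp add: pO_def)
      then show ?thesis using 1 by (metis rangeI)
    next
      case 2
      have "zsetP n (Complex (1/2) (1/2)) = {2*n+1}" using zP_N by (simp add: pO_def pA_def pB_def)
      then show ?thesis using 2 by (metis rangeI)
    next
      case (3 i)
      have "zsetP n (Complex (4*real i+3/2) (3/2)) = {2*i+1,2*n+1}" using zP_A[OF 3(1)] by (simp add: pA_def pB_def)
      then show ?thesis using 3 by (metis rangeI)
    next
      case (4 i)
      have "zsetP n (Complex (4*real i+5/2) (5/2)) = {2*i+1,2*i+2,2*n+1}" using zP_AB[OF 4(1)] by (simp add: pA_def pB_def)
      then show ?thesis using 4 by (metis rangeI)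
    next
      case (5 i)
      have "zsetP n (Complex (4*real i+5/2) (7/2)) = {2*i+2,2*n+1}" using zP_B[OF 5(1)] by (simp add: pA_def pB_def)
      then show ?thesis using 5 by (metis rangeI)
    qed
  qed
qed

lemma conn_P_N: "connected {p. zsetP n p = {2*n+1}}"
proof -
  let ?S = "{p. zsetP n p = {2*n+1}}"
  let ?P = "{p. pO n p \<and> (\<forall>i<n. \<not> pA i p \<and> \<not> pB i p)}"
  have S: "?S = ?P" using zP_N by auto
  let ?T = "closed_segment (Complex (1/2) (1/2)) (Complex (1/2) (9/2))"
  have TS: "?T \<subseteq> ?S" unfolding S
  proof
    fix u assume u: "u \<in> ?T"
    have b: "Re u = 1/2" "1/2 \<le> Im u" "Im u \<le> 9/2" using segb[OF u] by auto
    have "\<not> pA i u \<and> \<not> pB i u" for i using b unfolding pA_def pB_def by auto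
    moreover have "pO n u" using b unfolding pO_def by auto
    ultimately show "u \<in> ?P" by auto
  qed
  show ?thesis
  proof (rule conn_hub[OF connected_segment TS])
    fix x assume "x \<in> ?S"
    then have x: "pO n x" "\<And>i. i<n \<Longrightarrow> \<not> pA i x" "\<And>i. i<n \<Longrightarrow> \<not> pB i x" unfolding S by auto
    show "\<exists>y z. z \<in> ?T \<and> closed_segment x y \<subseteq> ?S \<and> closed_segment y z \<subseteq> ?S"
    proof (cases "Im x < 3")
      case True
      let ?y = "Complex (Re x) (1/2)" and ?z = "Complex (1/2) (1/2)"
      have 1: "closed_segment x ?y \<subseteq> ?S" unfolding S
      proof
        fix u assume u: "u \<in> closed_segment x ?y"
        note b = segV[OF u]
        have "\<not> pA i u \<and> \<not> pB i u" if i: "i < n" for i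
        proof
          show "\<not> pA i u"
          proof
            assume "pA i u"
            then have "1 < Im u" "4*real i+1 < Re x" "Re x < 4*real i+4" using b unfolding pA_def by auto
            then have "pA i x" using b True unfolding pA_def by (auto simp: min_def max_def split: if_splits)
            then show False using x(2)[OF i] by simp
          qed
          show "\<not> pB i u"
          proof
            assume "pB i u"
            then have "2 < Im u" "4*real i+2 < Re x" "Re x < 4*real i+3" using b unfolding pB_def by auto
            then have "pB i x" using b True unfolding pB_def by (auto simp: min_def max_def split: if_splits)
            then show False using x(3)[OF i] by simp
          qed
        qed
        moreover have "pO n u" using x(1) b True unfolding pO_def by (auto simp: min_def max_def split: if_splits)
        ultimately show "u \<in> ?P" by auto
      qed
      have 2: "closed_segment ?y ?z \<subseteq> ?S" unfolding S
      proof
        fix u assume u: "u \<in> closed_segment ?y ?z"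
        note b = segH[OF u]
        have "\<not> pA i u \<and> \<not> pB i u" for i using b unfolding pA_def pB_def by auto
        moreover have "pO n u" using x(1) b unfolding pO_def by (auto simp: min_def max_def split: if_splits)
        ultimately show "u \<in> ?P" by auto
      qed
      have "?z \<in> ?T" by simp
      then show ?thesis using 1 2 by blast
    next
      case False
      let ?y = "Complex (Re x) (9/2)" and ?z = "Complex (1/2) (9/2)"
      have xi: "Im x < 5" using x(1) unfolding pO_def by auto
      have 1: "closed_segment x ?y \<subseteq> ?S" unfolding S
      proof
        fix u assume u: "u \<in> closed_segment x ?y"
        note b = segV[OF u]
        have "\<not> pA i u \<and> \<not> pB i u" if i: "i < n" for i
        proof
          show "\<not> pA i u" using b False xi unfolding pA_def by (auto simp: min_def max_def split: if_splits)
          show "\<not> pB i u"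
          proof
            assume "pB i u"
            then have "Im u < 4" "4*real i+2 < Re x" "Re x < 4*real i+3" using b unfolding pB_def by auto
            then have "pB i x" using b False xi unfolding pB_def by (auto simp: min_def max_def split: if_splits)
            then show False using x(3)[OF i] by simp
          qed
        qed
        moreover have "pO n u" using x(1) b False unfolding pO_def by (auto simp: min_def max_def split: if_splits)
        ultimately show "u \<in> ?P" by auto
      qed
      have 2: "closed_segment ?y ?z \<subseteq> ?S" unfolding S
      proof
        fix u assume u: "u \<in> closed_segment ?y ?z"
        note b = segH[OF u]
        have "\<not> pA i u \<and> \<not> pB i u" for i using b unfolding pA_def pB_def by auto
        moreover have "pO n u" using x(1) b unfolding pO_def by (auto simp: min_def max_def split: if_splits)
        ultimately show "u \<in> ?P" by auto
      qed
      have "?z \<in> ?T" by simp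
      then show ?thesis using 1 2 by blast
    qed
  qed
qed

lemma conn_P_A:
  assumes i: "i < n"
  shows "connected {p. zsetP n p = {2*i+1,2*n+1}}"
proof -
  let ?S = "{p. zsetP n p = {2*i+1,2*n+1}}"
  let ?P = "{p. pA i p \<and> \<not> pB i p}"
  have S: "?S = ?P" using zP_A[OF i] by auto
  let ?c = "Complex (4*real i+3/2) (3/2)"
  have TS: "{?c} \<subseteq> ?S" unfolding S by (auto simp: pA_def pB_def)
  show ?thesis
  proof (rule conn_hub[OF connected_sing TS])
    fix x assume "x \<in> ?S"
    then have x: "pA i x" "\<not> pB i x" unfolding S by auto
    let ?y = "Complex (Re x) (3/2)"
    have 1: "closed_segment x ?y \<subseteq> ?S" unfolding S
    proof
      fix u assume u: "u \<in> closed_segment x ?y"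
      note b = segV[OF u]
      have "\<not> pB i u"
      proof
        assume "pB i u"
        then have "2 < Im u" "Im u < 4" "4*real i+2 < Re x" "Re x < 4*real i+3" using b unfolding pB_def by auto
        then have "pB i x" using b x(1) unfolding pB_def pA_def by (auto simp: min_def max_def split: if_splits)
        then show False using x(2) by simp
      qed
      moreover have "pA i u" using x(1) b unfolding pA_def by (auto simp: min_def max_def split: if_splits)
      ultimately show "u \<in> ?P" by auto
    qed
    have 2: "closed_segment ?y ?c \<subseteq> ?S" unfolding S
    proof
      fix u assume u: "u \<in> closed_segment ?y ?c"
      note b = segH[OF u]
      have "\<not> pB i u" using b unfolding pB_def by auto
      moreover have "pA i u" using x(1) b unfolding pA_def by (auto simp: min_def max_def split: if_splits)
      ultimately show "u \<in> ?P" by auto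
    qed
    show "\<exists>y z. z \<in> {?c} \<and> closed_segment x y \<subseteq> ?S \<and> closed_segment y z \<subseteq> ?S"
      using 1 2 by blast
  qed
qed

lemma conn_P_AB:
  assumes i: "i < n"
  shows "connected {p. zsetP n p = {2*i+1,2*i+2,2*n+1}}"
proof -
  let ?S = "{p. zsetP n p = {2*i+1,2*i+2,2*n+1}}"
  let ?P = "{p. pA i p \<and> pB i p}"
  have S: "?S = ?P" using zP_AB[OF i] by auto
  let ?c = "Complex (4*real i+5/2) (5/2)"
  have TS: "{?c} \<subseteq> ?S" unfolding S by (auto simp: pA_def pB_def)
  show ?thesis
  proof (rule conn_hub[OF connected_sing TS])
    fix x assume "x \<in> ?S"
    then have x: "pA i x" "pB i x" unfolding S by auto
    have 1: "closed_segment x x \<subseteq> ?S" using \<open>x \<in> ?S\<close> by simp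
    have 2: "closed_segment x ?c \<subseteq> ?S" unfolding S
    proof
      fix u assume u: "u \<in> closed_segment x ?c"
      note b = segb[OF u]
      have "pA i u" using x b unfolding pA_def pB_def by (auto simp: min_def max_def split: if_splits)
      moreover have "pB i u" using x b unfolding pA_def pB_def by (auto simp: min_def max_def split: if_splits)
      ultimately show "u \<in> ?P" by auto
    qed
    show "\<exists>y z. z \<in> {?c} \<and> closed_segment x y \<subseteq> ?S \<and> closed_segment y z \<subseteq> ?S"
      using 1 2 by blast
  qed
qed

lemma conn_P_B:
  assumes i: "i < n"
  shows "connected {p. zsetP n p = {2*i+2,2*n+1}}"
proof -
  let ?S = "{p. zsetP n p = {2*i+2,2*n+1}}"
  let ?P = "{p. pB i p \<and> \<not> pA i p}"
  have S: "?S = ?P" using zP_B[OF i] by auto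
  let ?c = "Complex (4*real i+5/2) (7/2)"
  have TS: "{?c} \<subseteq> ?S" unfolding S by (auto simp: pA_def pB_def)
  show ?thesis
  proof (rule conn_hub[OF connected_sing TS])
    fix x assume "x \<in> ?S"
    then have x: "pB i x" "\<not> pA i x" unfolding S by auto
    have x3: "Im x \<ge> 3" using x unfolding pA_def pB_def by auto
    have 1: "closed_segment x x \<subseteq> ?S" using \<open>x \<in> ?S\<close> by simp
    have 2: "closed_segment x ?c \<subseteq> ?S" unfolding S
    proof
      fix u assume u: "u \<in> closed_segment x ?c"
      note b = segb[OF u]
      have "\<not> pA i u" using x3 b unfolding pA_def by (auto simp: min_def max_def split: if_splits)
      moreover have "pB i u" using x b unfolding pB_def by (auto simp: min_def max_def split: if_splits)
      ultimately show "u \<in> ?P" by auto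
    qed
    show "\<exists>y z. z \<in> {?c} \<and> closed_segment x y \<subseteq> ?S \<and> closed_segment y z \<subseteq> ?S"
      using 1 2 by blast
  qed
qed

lemma conn_P_empty: "connected {p. zsetP n p = {}}"
proof -
  have "{p. zsetP n p = {}} = - rect 0 (4*real n+1) 0 5"
    using zP_empty by (auto simp: mem_rect pO_def)
  moreover have "connected (- rect 0 (4*real n+1) 0 5)"
    unfolding rect_def by (rule connected_complement_bounded_convex) (auto simp: bounded_box convex_box)
  ultimately show ?thesis by simp
qed

lemma conn_P: "Z \<in> ZP n \<Longrightarrow> connected {p. zsetP n p = Z}"
  unfolding ZP_def using conn_P_empty conn_P_N conn_P_A conn_P_AB conn_P_B by auto



lemma fP_OA: "i < n \<Longrightarrow> p \<in> frontier (RP n (2*n+1)) \<Longrightarrow> p \<in> frontier (RP n (2*i+1)) \<Longrightarrow> False"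
proof -
  assume i: "i < n" and a: "p \<in> frontier (RP n (2*n+1))" "p \<in> frontier (RP n (2*i+1))"
  have "4*real i+1 \<le> Re p \<and> Re p \<le> 4*real i+4 \<and> 1 \<le> Im p \<and> Im p \<le> 3" using a(2) unfolding frP_A[OF i] by blast
  moreover have "\<not> pO n p" using a(1) unfolding frP_O by blast
  ultimately show False using nat_sep[OF i] unfolding pO_def by auto
qed

lemma fP_OB: "i < n \<Longrightarrow> p \<in> frontier (RP n (2*n+1)) \<Longrightarrow> p \<in> frontier (RP n (2*i+2)) \<Longrightarrow> False"
proof -
  assume i: "i < n" and a: "p \<in> frontier (RP n (2*n+1))" "p \<in> frontier (RP n (2*i+2))"
  have "4*real i+2 \<le> Re p \<and> Re p \<le> 4*real i+3 \<and> 2 \<le> Im p \<and> Im p \<le> 4" using a(2) unfolding frP_B by blast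
  moreover have "\<not> pO n p" using a(1) unfolding frP_O by blast
  ultimately show False using nat_sep[OF i] unfolding pO_def by auto
qed

lemma fP_AA: "i < n \<Longrightarrow> k < n \<Longrightarrow> i \<noteq> k \<Longrightarrow> p \<in> frontier (RP n (2*i+1)) \<Longrightarrow> p \<in> frontier (RP n (2*k+1)) \<Longrightarrow> False"
proof -
  assume i: "i < n" and k: "k < n" "i \<noteq> k" and a: "p \<in> frontier (RP n (2*i+1))" "p \<in> frontier (RP n (2*k+1))"
  have "4*real i+1 \<le> Re p \<and> Re p \<le> 4*real i+4" using a(1) unfolding frP_A[OF i] by blast
  moreover have "4*real k+1 \<le> Re p \<and> Re p \<le> 4*real k+4" using a(2) unfolding frP_A[OF k(1)] by blast
  ultimately show False using uniqP[of i "Re p" k] k(2) by blast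
qed

lemma fP_BB: "i \<noteq> k \<Longrightarrow> p \<in> frontier (RP n (2*i+2)) \<Longrightarrow> p \<in> frontier (RP n (2*k+2)) \<Longrightarrow> False"
proof -
  assume k: "i \<noteq> k" and a: "p \<in> frontier (RP n (2*i+2))" "p \<in> frontier (RP n (2*k+2))"
  have "4*real i+2 \<le> Re p \<and> Re p \<le> 4*real i+3" using a(1) unfolding frP_B by blast
  moreover have "4*real k+2 \<le> Re p \<and> Re p \<le> 4*real k+3" using a(2) unfolding frP_B by blast
  ultimately show False using uniqP[of i "Re p" k] k by auto
qed

lemma fP_AB: "i < n \<Longrightarrow> i \<noteq> k \<Longrightarrow> p \<in> frontier (RP n (2*i+1)) \<Longrightarrow> p \<in> frontier (RP n (2*k+2)) \<Longrightarrow> False"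
proof -
  assume i: "i < n" and k: "i \<noteq> k" and a: "p \<in> frontier (RP n (2*i+1))" "p \<in> frontier (RP n (2*k+2))"
  have "4*real i+1 \<le> Re p \<and> Re p \<le> 4*real i+4" using a(1) unfolding frP_A[OF i] by blast
  moreover have "4*real k+2 \<le> Re p \<and> Re p \<le> 4*real k+3" using a(2) unfolding frP_B by blast
  ultimately show False using uniqP[of i "Re p" k] k by auto
qed

definition PT :: "nat \<Rightarrow> complex set" where
  "PT i = {Complex (4*real i+2) 3, Complex (4*real i+3) 3}"

lemma fP_ABi: "i < n \<Longrightarrow> p \<in> frontier (RP n (2*i+1)) \<Longrightarrow> p \<in> frontier (RP n (2*i+2)) \<Longrightarrow> p \<in> PT i"
proof -
  assume i: "i < n" and a: "p \<in> frontier (RP n (2*i+1))" "p \<in> frontier (RP n (2*i+2))"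
  have b: "4*real i+1 \<le> Re p" "Re p \<le> 4*real i+4" "1 \<le> Im p" "Im p \<le> 3" "\<not> pA i p"
    "4*real i+2 \<le> Re p" "Re p \<le> 4*real i+3" "2 \<le> Im p" "Im p \<le> 4" "\<not> pB i p"
    using a unfolding frP_A[OF i] frP_B by auto
  have i3: "Im p = 3" using b(4-9) unfolding pA_def by auto
  have "Re p = 4*real i+2 \<or> Re p = 4*real i+3" using b(6-10) i3 unfolding pB_def by auto
  then show ?thesis using i3 by (auto simp: complex_eq_iff PT_def)
qed

definition PP :: "nat \<Rightarrow> complex set" where
  "PP l = PT ((l-1) div 2)"

lemma PP_A: "PP (2*i+1) = PT i" by (simp add: PP_def)
lemma PP_B: "PP (2*i+2) = PT i" by (simp add: PP_def)

lemma fr_pairP: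
  assumes l: "l \<in> {1..2*n+1}" and l': "l' \<in> {1..2*n+1}" and ne: "l \<noteq> l'"
  shows "frontier (RP n l) \<inter> frontier (RP n l') \<subseteq> PP l \<union> PP l'"
proof
  fix p assume p: "p \<in> frontier (RP n l) \<inter> frontier (RP n l')"
  then have p1: "p \<in> frontier (RP n l)" and p2: "p \<in> frontier (RP n l')" by auto
  consider "l = 2*n+1" | i where "i<n" "l = 2*i+1" | i where "i<n" "l = 2*i+2" using labP[OF l] by blast
  then show "p \<in> PP l \<union> PP l'"
  proof cases
    case 1
    consider "l' = 2*n+1" | k where "k<n" "l' = 2*k+1" | k where "k<n" "l' = 2*k+2" using labP[OF l'] by blast
    then show ?thesis
    proof cases
      case 1 then show ?thesis using ne \<open>l = 2*n+1\<close> by simp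
    next
      case (2 k) then show ?thesis using fP_OA[OF 2(1), of p] p1 p2 \<open>l = 2*n+1\<close> by simp
    next
      case (3 k) then show ?thesis using fP_OB[OF 3(1), of p] p1 p2 \<open>l = 2*n+1\<close> by simp
    qed
  next
    case (2 i)
    consider "l' = 2*n+1" | k where "k<n" "l' = 2*k+1" | k where "k<n" "l' = 2*k+2" using labP[OF l'] by blast
    then show ?thesis
    proof cases
      case 1 then show ?thesis using fP_OA[OF 2(1), of p] p1 p2 2 by simp
    next
      case (2 k)
      then have "i \<noteq> k" using ne \<open>l = 2*i+1\<close> by auto
      then show ?thesis using fP_AA[OF \<open>i<n\<close> 2(1) _, of p] p1 p2 2 \<open>l = 2*i+1\<close> by simp
    next
      case (3 k)
      show ?thesis
      proof (cases "i = k")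
        case True then show ?thesis using fP_ABi[OF \<open>i<n\<close>, of p] p1 p2 3 \<open>l = 2*i+1\<close> PP_A by simp
      next
        case False then show ?thesis using fP_AB[OF \<open>i<n\<close> False, of p] p1 p2 3 \<open>l = 2*i+1\<close> by simp
      qed
    qed
  next
    case (3 i)
    consider "l' = 2*n+1" | k where "k<n" "l' = 2*k+1" | k where "k<n" "l' = 2*k+2" using labP[OF l'] by blast
    then show ?thesis
    proof cases
      case 1 then show ?thesis using fP_OB[OF 3(1), of p] p1 p2 3 by simp
    next
      case (2 k)
      show ?thesis
      proof (cases "i = k")
        case True then show ?thesis using fP_ABi[OF \<open>k<n\<close>, of p] p1 p2 2 \<open>l = 2*i+2\<close> PP_B by simp
      next
        case False
        then have "k \<noteq> i" by simp
        then show ?thesis using fP_AB[OF \<open>k<n\<close> \<open>k \<noteq> i\<close>, of p] p1 p2 2 \<open>l = 2*i+2\<close> by simp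
      qed
    next
      case (3 k)
      then have "i \<noteq> k" using ne \<open>l = 2*i+2\<close> by auto
      then show ?thesis using fP_BB[OF \<open>i \<noteq> k\<close>, of p n] p1 p2 3 \<open>l = 2*i+2\<close> by simp
    qed
  qed
qed

lemma card_P: "\<exists>u v. {l\<in>{1..2*n+1}. p \<in> frontier (RP n l)} \<subseteq> {u,v}"
proof (cases "\<exists>i<n. 4*real i+1 \<le> Re p \<and> Re p \<le> 4*real i+4 \<and> 0 < Im p \<and> Im p < 5")
  case True
  then obtain i where i: "i < n" "4*real i+1 \<le> Re p" "Re p \<le> 4*real i+4" "0 < Im p" "Im p < 5" by blast
  have "{l\<in>{1..2*n+1}. p \<in> frontier (RP n l)} \<subseteq> {2*i+1, 2*i+2}"
  proof
    fix l assume "l \<in> {l\<in>{1..2*n+1}. p \<in> frontier (RP n l)}"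
    then have l: "l \<in> {1..2*n+1}" "p \<in> frontier (RP n l)" by auto
    consider "l = 2*n+1" | k where "k<n" "l = 2*k+1" | k where "k<n" "l = 2*k+2" using labP[OF l(1)] by blast
    then show "l \<in> {2*i+1, 2*i+2}"
    proof cases
      case 1
      have "pO n p" using i nat_sep[of i n] unfolding pO_def by auto
      then show ?thesis using l(2) 1 frP_O by blast
    next
      case (2 k)
      then have "4*real k+1 \<le> Re p" "Re p \<le> 4*real k+4" using l(2) frP_A[OF 2(1)] by auto
      then have "k = i" using uniqP i(2,3) by blast
      then show ?thesis using 2 by simp
    next
      case (3 k)
      then have "4*real k+1 \<le> Re p" "Re p \<le> 4*real k+4" using l(2) frP_B by auto
      then have "k = i" using uniqP i(2,3) by blast
      then show ?thesis using 3 by simp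
    qed
  qed
  then show ?thesis by blast
next
  case False
  have "{l\<in>{1..2*n+1}. p \<in> frontier (RP n l)} \<subseteq> {2*n+1, 2*n+1}"
  proof
    fix l assume "l \<in> {l\<in>{1..2*n+1}. p \<in> frontier (RP n l)}"
    then have l: "l \<in> {1..2*n+1}" "p \<in> frontier (RP n l)" by auto
    consider "l = 2*n+1" | k where "k<n" "l = 2*k+1" | k where "k<n" "l = 2*k+2" using labP[OF l(1)] by blast
    then show "l \<in> {2*n+1, 2*n+1}"
    proof cases
      case 1 then show ?thesis by simp
    next
      case (2 k)
      then have "4*real k+1 \<le> Re p" "Re p \<le> 4*real k+4" "1 \<le> Im p" "Im p \<le> 3" using l(2) frP_A[OF 2(1)] by auto
      then show ?thesis using False 2(1) by auto
    next
      case (3 k)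
      then have "4*real k+2 \<le> Re p" "Re p \<le> 4*real k+3" "2 \<le> Im p" "Im p \<le> 4" using l(2) frP_B by auto
      then show ?thesis using False 3(1) by fastforce
    qed
  qed
  then show ?thesis by blast
qed

lemma wf_P: "well_formed ({1..2*n+1}, ZP n)"
proof (rule wf_rects[where R = "RP n"])
  show "finite {1..2*n+1}" by simp
next
  fix l assume l: "l \<in> {1..2*n+1}"
  consider "l = 2*n+1" | i where "i<n" "l = 2*i+1" | i where "i<n" "l = 2*i+2" using labP[OF l] by blast
  then show "\<exists>a b c d. a<b \<and> c<d \<and> RP n l = rect a b c d"
  proof cases
    case 1 then show ?thesis using RP_O[of n]
      by (intro exI[of _ 0] exI[of _ "4*real n+1"] exI[of _ 0] exI[of _ 5]) simp
  next
    case (2 i) then show ?thesis using RP_A[OF 2(1)]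
      by (intro exI[of _ "4*real i+1"] exI[of _ "4*real i+4"] exI[of _ 1] exI[of _ 3]) simp
  next
    case (3 i) then show ?thesis using RP_B[of n i]
      by (intro exI[of _ "4*real i+2"] exI[of _ "4*real i+3"] exI[of _ 2] exI[of _ 4]) simp
  qed
next
  fix l l' assume "l \<in> {1..2*n+1}" "l' \<in> {1..2*n+1}" "l \<noteq> l'"
  then show "finite (frontier (RP n l) \<inter> frontier (RP n l'))"
    using fr_pairP finite_subset[of _ "PP l \<union> PP l'"] by (simp add: PP_def PT_def)
next
  fix p show "\<exists>u v. {l\<in>{1..2*n+1}. p \<in> frontier (RP n l)} \<subseteq> {u,v}" using card_P .
next
  show "range (\<lambda>p. {l\<in>{1..2*n+1}. p \<in> RP n l}) = ZP n" using zP_range_eq unfolding zsetP_def .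
next
  fix Z assume "Z \<in> ZP n"
  then show "connected {p. {l\<in>{1..2*n+1}. p \<in> RP n l} = Z}" using conn_P unfolding zsetP_def by blast
qed



lemma P2_code_ind: "P2_code n = ind (2*n+1) ` ZP n"
proof -
  let ?N = "2*n+1"
  have inner: "{vadd (unit_vec ?N (2*i+1)) (unit_vec ?N ?N),
            vadd (vadd (unit_vec ?N (2*i+1)) (unit_vec ?N (2*i+2))) (unit_vec ?N ?N),
            vadd (unit_vec ?N (2*i+2)) (unit_vec ?N ?N)}
        = ind ?N ` {{2*i+1,?N}, {2*i+1,2*i+2,?N}, {2*i+2,?N}}" if i: "i \<in> {0..<n}" for i
  proof -
    have d1: "{2*i+1} \<inter> {?N} = {}" using i by auto
    have d2: "{2*i+1} \<inter> {2*i+2} = {}" by auto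
    have d3: "({2*i+1} \<union> {2*i+2}) \<inter> {?N} = {}" using i par2[of i n] by auto
    have d4: "{2*i+2} \<inter> {?N} = {}" using par2[of i n] by auto
    have e1: "vadd (ind ?N {2*i+1}) (ind ?N {?N}) = ind ?N {2*i+1,?N}"
      using vadd_ind[OF d1, of ?N] by (simp add: insert_commute)
    have e2: "vadd (vadd (ind ?N {2*i+1}) (ind ?N {2*i+2})) (ind ?N {?N}) = ind ?N {2*i+1,2*i+2,?N}"
      using vadd_ind[OF d2, of ?N] vadd_ind[OF d3, of ?N] by (simp add: insert_commute)
    have e3: "vadd (ind ?N {2*i+2}) (ind ?N {?N}) = ind ?N {2*i+2,?N}"
      using vadd_ind[OF d4, of ?N] by (simp add: insert_commute)
    show ?thesis unfolding unit_ind e1 e2 e3 by (simp only: image_insert image_empty)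
  qed
  have U: "(\<Union>i\<in>{0..<n}. {vadd (unit_vec ?N (2*i+1)) (unit_vec ?N ?N),
            vadd (vadd (unit_vec ?N (2*i+1)) (unit_vec ?N (2*i+2))) (unit_vec ?N ?N),
            vadd (unit_vec ?N (2*i+2)) (unit_vec ?N ?N)})
      = (\<Union>i\<in>{0..<n}. ind ?N ` {{2*i+1,?N}, {2*i+1,2*i+2,?N}, {2*i+2,?N}})"
    by (rule SUP_cong[OF refl inner])
  have "P2_code n = insert (ind ?N {}) (insert (ind ?N {?N})
      (\<Union>i\<in>{0..<n}. ind ?N ` {{2*i+1,?N}, {2*i+1,2*i+2,?N}, {2*i+2,?N}}))"
    unfolding P2_code_def U unfolding zero_ind unit_ind[of ?N ?N] ..
  also have "\<dots> = ind ?N ` ZP n" unfolding ZP_def by (simp add: image_UN)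
  finally show ?thesis .
qed

lemma ZP_sub: "\<forall>A\<in>ZP n. A \<subseteq> {1..2*n+1}"
  unfolding ZP_def by auto

lemma desc_P: "desc (2*n+1) (P2_code n) = ({1..2*n+1}, ZP n)"
  unfolding P2_code_ind using desc_ind[OF ZP_sub] .

lemma is_code_P: "is_code (2*n+1) (P2_code n)"
  unfolding P2_code_ind by (rule is_code_ind) (simp add: ZP_def)

lemma kip_single: "k_ind_pierced 1 ({N}, {{},{N}})"
proof (rule kip_step0[of N _ "{}"])
  show "Xset {{}, {N}} N = {insert N {}}" by (auto simp: Xset_def)
  have "{N} - {N} = {}" "(\<lambda>Z. Z - {N}) ` {{}, {N}} = {{}}" by auto
  then show "k_ind_pierced 1 ({N} - {N}, (\<lambda>Z. Z - {N}) ` {{}, {N}})"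
    using k_ind_pierced.empty by simp
qed auto

definition LPk :: "nat \<Rightarrow> nat \<Rightarrow> nat set" where
  "LPk N k = insert N {1..2*k}"
definition ZPk :: "nat \<Rightarrow> nat \<Rightarrow> nat set set" where
  "ZPk N k = {{}, {N}} \<union> (\<Union>i\<in>{0..<k}. {{2*i+1,N}, {2*i+1,2*i+2,N}, {2*i+2,N}})"

lemma ZPk_sub: "Z \<in> ZPk N k \<Longrightarrow> Z \<subseteq> LPk N k"
  unfolding ZPk_def LPk_def by auto

lemma ZPk_Suc: "ZPk N (Suc k) = insert {2*k+1,N} (insert {2*k+1,2*k+2,N} (insert {2*k+2,N} (ZPk N k)))"
  unfolding ZPk_def atLeast0_lessThan_Suc UN_insert by blast

lemma LPk_Suc: "LPk N (Suc k) = insert (2*k+1) (insert (2*k+2) (LPk N k))"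
  unfolding LPk_def by (rule set_eqI) (simp, presburger)

lemma ZPk_img: "x \<notin> LPk N k \<Longrightarrow> (\<lambda>Z. Z - {x}) ` ZPk N k = ZPk N k"
proof -
  assume a: "x \<notin> LPk N k"
  have "Z - {x} = Z" if "Z \<in> ZPk N k" for Z using ZPk_sub[OF that] a by blast
  then show ?thesis by (simp add: image_cong)
qed

lemma ZPk_X: "x \<notin> LPk N k \<Longrightarrow> Xset (ZPk N k) x = {}"
  unfolding Xset_def using ZPk_sub by blast

lemma ZPk_N: "{N} \<in> ZPk N k" unfolding ZPk_def by simp

lemma kip_P_gen: "2*k < N \<Longrightarrow> k_ind_pierced 1 (LPk N k, ZPk N k)"
proof (induction k)
  case 0
  have "LPk N 0 = {N}" "ZPk N 0 = {{},{N}}" by (auto simp: LPk_def ZPk_def)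
  then show ?case using kip_single by simp
next
  case (Suc k)
  let ?a = "2*k+1" and ?l = "2*k+2"
  have ih: "k_ind_pierced 1 (LPk N k, ZPk N k)" using Suc by simp
  have lt: "?l < N" using Suc.prems by simp
  have na: "?a \<notin> LPk N k" "?l \<notin> LPk N k" using lt by (auto simp: LPk_def)
  have nN: "?a \<noteq> N" "?l \<noteq> N" using lt by auto
  have D': "k_ind_pierced 1 (insert ?a (LPk N k), insert {?a,N} (ZPk N k))"
  proof (rule kip_step0[of ?a _ "{N}"])
    show "?a \<in> insert ?a (LPk N k)" by simp
    show "{N} \<in> insert {?a,N} (ZPk N k)" using ZPk_N by simp
    show "?a \<notin> {N}" using nN by simp
    show "Xset (insert {?a,N} (ZPk N k)) ?a = {insert ?a {N}}"
      using ZPk_X[OF na(1)] unfolding Xset_def by auto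
    have "insert ?a (LPk N k) - {?a} = LPk N k" using na by auto
    moreover have "(\<lambda>Z. Z - {?a}) ` insert {?a,N} (ZPk N k) = ZPk N k"
      using ZPk_img[OF na(1)] ZPk_N nN by auto
    ultimately show "k_ind_pierced 1 (insert ?a (LPk N k) - {?a}, (\<lambda>Z. Z - {?a}) ` insert {?a,N} (ZPk N k))"
      using ih by simp
  qed
  show ?case
  proof (rule kip_step1[of ?l _ ?a "{N}"])
    show "?l \<in> LPk N (Suc k)" "?a \<in> LPk N (Suc k)" by (simp_all add: LPk_Suc)
    show "?a \<noteq> ?l" "?l \<notin> {N}" "?a \<notin> {N}" using nN by auto
    show "{N} \<in> ZPk N (Suc k)" using ZPk_N by simp
    show "insert ?a {N} \<in> ZPk N (Suc k)" by (simp add: ZPk_Suc)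
    have "Xset (ZPk N (Suc k)) ?l = {{?a,?l,N}, {?l,N}} \<union> Xset (ZPk N k) ?l"
      unfolding ZPk_Suc Xset_def using nN by auto
    then show "Xset (ZPk N (Suc k)) ?l = {insert ?l {N}, insert ?a (insert ?l {N})}"
      using ZPk_X[OF na(2)] by auto
    have "LPk N (Suc k) - {?l} = insert ?a (LPk N k)" using na unfolding LPk_Suc by auto
    moreover have "(\<lambda>Z. Z - {?l}) ` ZPk N (Suc k) = insert {?a,N} (ZPk N k)"
    proof -
      have "(\<lambda>Z. Z - {?l}) ` ZPk N (Suc k) = insert ({?a,N} - {?l}) (insert ({?a,?l,N} - {?l})
              (insert ({?l,N} - {?l}) ((\<lambda>Z. Z - {?l}) ` ZPk N k)))"
        unfolding ZPk_Suc by simp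
      also have "\<dots> = insert {?a,N} (insert {N} (ZPk N k))" unfolding ZPk_img[OF na(2)] using nN by auto
      also have "\<dots> = insert {?a,N} (ZPk N k)" using ZPk_N by auto
      finally show ?thesis .
    qed
    ultimately show "k_ind_pierced 1 (LPk N (Suc k) - {?l}, (\<lambda>Z. Z - {?l}) ` ZPk N (Suc k))"
      using D' by simp
  qed
qed

lemma kip_P: "k_ind_pierced 1 ({1..2*n+1}, ZP n)"
proof -
  have "LPk (2*n+1) n = {1..2*n+1}" by (auto simp: LPk_def)
  moreover have "ZPk (2*n+1) n = ZP n" by (simp add: ZPk_def ZP_def)
  ultimately show ?thesis using kip_P_gen[of n "2*n+1"] by simp
qed

theorem mainTheorem1:
  fixes n :: nat
  assumes "n \<ge> 1"
  shows "code_k_ind_pierced 1 (n+1) (S_code n) \<and> code_k_ind_pierced 1 (2*n+1) (P2_code n)"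
  unfolding code_k_ind_pierced_def
  using assms is_code_S desc_S wf_S kip_S is_code_P desc_P wf_P kip_P by simp


end
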